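(* Let $\mathbb{M}$ be a partial group. Then there is an isomorphism of simplicial groups $N\mathcal{A}ut(\mathbb{M})\cong\underline{\mathrm{aut}}(\mathbb{M})$ between the nerve of the strict monoidal category $\mathcal{A}ut(\mathbb{M})$ and the simplicial group of self-equivalences of $\mathbb{M}$.
   Context: Partial groups are simplicial sets whose $n$-simplices are the words $[x_1|\dots|x_n]$ in the domain of the partial product (faces multiply adjacent letters or delete first/last letter; degeneracies insert $1$); $v$ is the unique vertex, $\Delta[1]$ has non-degenerate edge $\iota_1\colon\bullet_0\to\bullet_1$. $N(\mathbb{M})$ denotes the normalizer: the set of $\eta\in\mathbb{M}_1$ such that for every $x$, $[\eta|x|\eta^{-1}]\in\mathbb{M}$ and $x\mapsto\eta x\eta^{-1}$ extends to an automorphism, and for every simplex $[x_1|\dots|x_n]$ the words $[\eta x_1\eta^{-1}|\dots|\eta x_i\eta^{-1}|\eta|x_{i+1}|\dots|x_n]$ ($0\le i\le n$) are simplices with equal products. $\underline{\mathrm{aut}}(\mathbb{M})$ is the simplicial group whose $n$-simplices are the maps $\Delta[n]\times\mathbb{M}\to\mathbb{M}$ that induce automorphisms of $\Delta[n]\times\mathbb{M}$ over $\Delta[n]$ (product: $\sigma\cdot\tau=\tau\circ(\mathrm{pr}_1,\sigma)$). The category $\mathcal{A}ut(\mathbb{M})$ has objects $\mathrm{Aut}(\mathbb{M})$; a morphism from $\Psi$ to $\Phi$, written $(\Phi\xleftarrow{\eta}\Psi)$, is an element $\eta=F(v,\iota_1)\in N(\mathbb{M})$ for a simplicial homotopy $F\colon\mathbb{M}\times\Delta[1]\to\mathbb{M}$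 with $F|_{\mathbb{M}\times\{\bullet_0\}}=\Phi$ and $F|_{\mathbb{M}\times\{\bullet_1\}}=\Psi$ (equivalently $\Phi(x)\eta=\eta\Psi(x)$ with the associated simplex conditions); composition is $(\Psi_0\xleftarrow{\eta_1}\Psi_1)\circ(\Psi_1\xleftarrow{\eta_2}\Psi_2)=(\Psi_0\xleftarrow{\eta_1\eta_2}\Psi_2)$. The monoidal product is $\Phi\otimes\Psi=\Phi\circ\Psi$ on objects and $(\Phi_0\xleftarrow{\omega}\Phi_1)\otimes(\Psi_0\xleftarrow{\eta}\Psi_1)=(\Phi_0\circ\Psi_0\xleftarrow{\Phi_0(\eta)\omega=\omega\Phi_1(\eta)}\Phi_1\circ\Psi_1)$, with unit $(\mathrm{Id}\xleftarrow{1}\mathrm{Id})$; this makes the nerve $N\mathcal{A}ut(\mathbb{M})$ a simplicial group. *)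

theory Defs
  imports Main
begin

record 'a pgroup =
  pg_M :: "'a set"
  pg_D :: "'a list set"
  pg_Pi :: "'a list \<Rightarrow> 'a"
  pg_inv :: "'a \<Rightarrow> 'a"

definition pg_one :: "'a pgroup \<Rightarrow> 'a" where
  "pg_one G = pg_Pi G []"

definition partial_group :: "'a pgroup \<Rightarrow> bool" where
  "partial_group G \<longleftrightarrow>
     pg_D G \<subseteq> lists (pg_M G) \<and>
     [] \<in> pg_D G \<and>
     (\<forall>x\<in>pg_M G. [x] \<in> pg_D G) \<and>
     (\<forall>u v. u @ v \<in> pg_D G \<longrightarrow> u \<in> pg_D G \<and> v \<in> pg_D G) \<and>
     (\<forall>w\<in>pg_D G. pg_Pi G w \<in> pg_M G) \<and>
     (\<forall>x\<in>pg_M G. pg_Pi G [x] = x) \<and>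
     (\<forall>u v w. u @ v @ w \<in> pg_D G \<longrightarrow>
        u @ [pg_Pi G v] @ w \<in> pg_D G \<and> pg_Pi G (u @ v @ w) = pg_Pi G (u @ [pg_Pi G v] @ w)) \<and>
     (\<forall>x\<in>pg_M G. pg_inv G x \<in> pg_M G \<and> pg_inv G (pg_inv G x) = x) \<and>
     (\<forall>w\<in>pg_D G. rev (map (pg_inv G) w) @ w \<in> pg_D G \<and>
        pg_Pi G (rev (map (pg_inv G) w) @ w) = pg_one G)"

text \<open>k-simplices: words of length k in the domain.\<close>
definition Dk :: "'a pgroup \<Rightarrow> nat \<Rightarrow> 'a list set" where
  "Dk G k = {w \<in> pg_D G. length w = k}"

definition wface :: "'a pgroup \<Rightarrow> nat \<Rightarrow> nat \<Rightarrow> 'a list \<Rightarrow> 'a list" where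
  "wface G k i w =
     (if i = 0 then tl w
      else if i = k then butlast w
      else take (i - 1) w @ [pg_Pi G [w ! (i - 1), w ! i]] @ drop (Suc i) w)"

definition wdeg :: "'a pgroup \<Rightarrow> nat \<Rightarrow> 'a list \<Rightarrow> 'a list" where
  "wdeg G i w = take i w @ [pg_one G] @ drop i w"

text \<open>k-simplices of Delta[n]: monotone maps [k] -> [n], as sorted lists of length k+1.\<close>
definition dsimp :: "nat \<Rightarrow> nat \<Rightarrow> nat list set" where
  "dsimp n k = {a. length a = Suc k \<and> sorted a \<and> (\<forall>j\<in>set a. j \<le> n)}"

definition ldel :: "nat \<Rightarrow> 'b list \<Rightarrow> 'b list" where
  "ldel i a = take i a @ drop (Suc i) a"

definition ldup :: "nat \<Rightarrow> 'b list \<Rightarrow> 'b list" where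
  "ldup i a = take (Suc i) a @ drop i a"

definition coface :: "nat \<Rightarrow> nat \<Rightarrow> nat" where
  "coface i j = (if j < i then j else Suc j)"

definition codeg :: "nat \<Rightarrow> nat \<Rightarrow> nat" where
  "codeg i j = (if j \<le> i then j else j - 1)"

definition prod_valid :: "'a pgroup \<Rightarrow> nat \<Rightarrow> nat list \<Rightarrow> 'a list \<Rightarrow> bool" where
  "prod_valid G n a w \<longleftrightarrow> (\<exists>k. a \<in> dsimp n k \<and> w \<in> Dk G k)"

definition prod_smap :: "'a pgroup \<Rightarrow> nat \<Rightarrow> (nat list \<Rightarrow> 'a list \<Rightarrow> 'a list) \<Rightarrow> bool" where
  "prod_smap G n F \<longleftrightarrow>
     (\<forall>k a w. a \<in> dsimp n k \<and> w \<in> Dk G k \<longrightarrow> F a w \<in> Dk G k) \<and>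
     (\<forall>a w. \<not> prod_valid G n a w \<longrightarrow> F a w = undefined) \<and>
     (\<forall>k a w i. a \<in> dsimp n (Suc k) \<and> w \<in> Dk G (Suc k) \<and> i \<le> Suc k \<longrightarrow>
        F (ldel i a) (wface G (Suc k) i w) = wface G (Suc k) i (F a w)) \<and>
     (\<forall>k a w i. a \<in> dsimp n k \<and> w \<in> Dk G k \<and> i \<le> k \<longrightarrow>
        F (ldup i a) (wdeg G i w) = wdeg G i (F a w))"

text \<open>n-simplices of aut(M): maps inducing automorphisms of Delta[n] x M over Delta[n].\<close>
definition aut_elem :: "'a pgroup \<Rightarrow> nat \<Rightarrow> (nat list \<Rightarrow> 'a list \<Rightarrow> 'a list) \<Rightarrow> bool" where
  "aut_elem G n F \<longleftrightarrow> prod_smap G n F \<and>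
     (\<forall>k a. a \<in> dsimp n k \<longrightarrow> bij_betw (F a) (Dk G k) (Dk G k))"

text \<open>sg_face X n i : level n -> level n-1 (i \<le> n); sg_deg X n i : level n -> level n+1 (i \<le> n);
  sg_mult X n : group product on level n.\<close>
record 'x ssg =
  sg_car :: "nat \<Rightarrow> 'x set"
  sg_face :: "nat \<Rightarrow> nat \<Rightarrow> 'x \<Rightarrow> 'x"
  sg_deg :: "nat \<Rightarrow> nat \<Rightarrow> 'x \<Rightarrow> 'x"
  sg_mult :: "nat \<Rightarrow> 'x \<Rightarrow> 'x \<Rightarrow> 'x"

definition ssg_iso :: "'x ssg \<Rightarrow> 'y ssg \<Rightarrow> (nat \<Rightarrow> 'x \<Rightarrow> 'y) \<Rightarrow> bool" where
  "ssg_iso X Y f \<longleftrightarrow>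
     (\<forall>n. bij_betw (f n) (sg_car X n) (sg_car Y n)) \<and>
     (\<forall>n i x. x \<in> sg_car X (Suc n) \<and> i \<le> Suc n \<longrightarrow>
        f n (sg_face X (Suc n) i x) = sg_face Y (Suc n) i (f (Suc n) x)) \<and>
     (\<forall>n i x. x \<in> sg_car X n \<and> i \<le> n \<longrightarrow>
        f (Suc n) (sg_deg X n i x) = sg_deg Y n i (f n x)) \<and>
     (\<forall>n x y. x \<in> sg_car X n \<and> y \<in> sg_car X n \<longrightarrow>
        f n (sg_mult X n x y) = sg_mult Y n (f n x) (f n y))"

definition aut_sg :: "'a pgroup \<Rightarrow> (nat list \<Rightarrow> 'a list \<Rightarrow> 'a list) ssg" where
  "aut_sg G = \<lparr>
     sg_car = (\<lambda>n. {F. aut_elem G n F}),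
     sg_face = (\<lambda>n i F. \<lambda>a w. if prod_valid G (n - 1) a w then F (map (coface i) a) w else undefined),
     sg_deg = (\<lambda>n i F. \<lambda>a w. if prod_valid G (Suc n) a w then F (map (codeg i) a) w else undefined),
     sg_mult = (\<lambda>n S T. \<lambda>a w. if prod_valid G n a w then T a (S a w) else undefined) \<rparr>"

text \<open>Automorphisms of the simplicial set M, as level-wise maps on words (undefined off the domain).\<close>
definition AutSet :: "'a pgroup \<Rightarrow> ('a list \<Rightarrow> 'a list) set" where
  "AutSet G = {P.
     (\<forall>w. w \<notin> pg_D G \<longrightarrow> P w = undefined) \<and>
     (\<forall>k. bij_betw P (Dk G k) (Dk G k)) \<and>
     (\<forall>k w i. w \<in> Dk G (Suc k) \<and> i \<le> Suc k \<longrightarrow>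
        P (wface G (Suc k) i w) = wface G (Suc k) i (P w)) \<and>
     (\<forall>k w i. w \<in> Dk G k \<and> i \<le> k \<longrightarrow> P (wdeg G i w) = wdeg G i (P w))}"

definition conj_word :: "'a pgroup \<Rightarrow> 'a \<Rightarrow> nat \<Rightarrow> 'a list \<Rightarrow> 'a list" where
  "conj_word G e i w =
     map (\<lambda>x. pg_Pi G [e, x, pg_inv G e]) (take i w) @ [e] @ drop i w"

definition normalizer :: "'a pgroup \<Rightarrow> 'a set" where
  "normalizer G = {e \<in> pg_M G.
     (\<forall>x\<in>pg_M G. [e, x, pg_inv G e] \<in> pg_D G) \<and>
     (\<exists>P\<in>AutSet G. \<forall>x\<in>pg_M G. P [x] = [pg_Pi G [e, x, pg_inv G e]]) \<and>
     (\<forall>w\<in>pg_D G. \<forall>i\<le>length w. conj_word G e i w \<in> pg_D G) \<and>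
     (\<forall>w\<in>pg_D G. \<forall>i\<le>length w. \<forall>j\<le>length w.
        pg_Pi G (conj_word G e i w) = pg_Pi G (conj_word G e j w))}"

text \<open>Morphisms from Psi to Phi: eta = F(v, iota_1) for a simplicial homotopy F with
  F restricted to bullet_0 equal to Phi and to bullet_1 equal to Psi.
  (The homotopy M x Delta[1] -> M is written with the factors swapped: F a w.)\<close>
definition aut_hom :: "'a pgroup \<Rightarrow> ('a list \<Rightarrow> 'a list) \<Rightarrow> ('a list \<Rightarrow> 'a list) \<Rightarrow> 'a set" where
  "aut_hom G Psi Phi = {e. e \<in> normalizer G \<and>
     (\<exists>F. prod_smap G 1 F \<and>
        (\<forall>k w. w \<in> Dk G k \<longrightarrow> F (replicate (Suc k) 0) w = Phi w) \<and>
        (\<forall>k w. w \<in> Dk G k \<longrightarrow> F (replicate (Suc k) 1) w = Psi w) \<and>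
        F [0, 1] (wdeg G 0 []) = [e])}"

definition aut_comp :: "'a pgroup \<Rightarrow> ('a list \<Rightarrow> 'a list) \<Rightarrow> ('a list \<Rightarrow> 'a list) \<Rightarrow> ('a list \<Rightarrow> 'a list)" where
  "aut_comp G P Q = (\<lambda>w. if w \<in> pg_D G then P (Q w) else undefined)"

text \<open>An n-simplex: objects Psi_0..Psi_n and morphisms eta_1..eta_n, eta_{i+1} = es!i : Psi_{i+1} -> Psi_i.\<close>
definition nerve_Aut :: "'a pgroup \<Rightarrow> (('a list \<Rightarrow> 'a list) list \<times> 'a list) ssg" where
  "nerve_Aut G = \<lparr>
     sg_car = (\<lambda>n. {(Ps, es). length Ps = Suc n \<and> length es = n \<and> set Ps \<subseteq> AutSet G \<and>
                      (\<forall>i<n. es ! i \<in> aut_hom G (Ps ! Suc i) (Ps ! i))}),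
     sg_face = (\<lambda>n i (Ps, es). (ldel i Ps, wface G n i es)),
     sg_deg = (\<lambda>n i (Ps, es). (ldup i Ps, wdeg G i es)),
     sg_mult = (\<lambda>n (Ps, es) (Qs, fs).
        (map2 (aut_comp G) Ps Qs,
         map (\<lambda>i. pg_Pi G ((Ps ! i) [fs ! i] @ [es ! i])) [0..<n])) \<rparr>"

end

theory Submission
  imports Defs
begin


locale pgrp =
  fixes G :: "'a pgroup"
  assumes pg: "partial_group G"
begin

abbreviation "D \<equiv> pg_D G"
abbreviation "M \<equiv> pg_M G"
abbreviation "Pi \<equiv> pg_Pi G"
abbreviation "iv \<equiv> pg_inv G"
abbreviation "one \<equiv> pg_one G"

lemma D_lists: "w \<in> D \<Longrightarrow> w \<in> lists M" using pg unfolding partial_group_def by blast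
lemma nil_D[simp]: "[] \<in> D" using pg unfolding partial_group_def by blast
lemma sing_D: "x \<in> M \<Longrightarrow> [x] \<in> D" using pg unfolding partial_group_def by blast
lemma app_D: "u @ v \<in> D \<Longrightarrow> u \<in> D \<and> v \<in> D" using pg unfolding partial_group_def by blast
lemma app_D1: "u @ v \<in> D \<Longrightarrow> u \<in> D" using app_D by blast
lemma app_D2: "u @ v \<in> D \<Longrightarrow> v \<in> D" using app_D by blast
lemma Pi_M: "w \<in> D \<Longrightarrow> Pi w \<in> M" using pg unfolding partial_group_def by blast
lemma Pi_sing[simp]: "x \<in> M \<Longrightarrow> Pi [x] = x" using pg unfolding partial_group_def by blast
lemma coll: "u @ v @ w \<in> D \<Longrightarrow> u @ [Pi v] @ w \<in> D \<and> Pi (u @ v @ w) = Pi (u @ [Pi v] @ w)"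
  using pg unfolding partial_group_def by blast
lemma iv_M: "x \<in> M \<Longrightarrow> iv x \<in> M" using pg unfolding partial_group_def by blast
lemma iv_iv[simp]: "x \<in> M \<Longrightarrow> iv (iv x) = x" using pg unfolding partial_group_def by blast
lemma ax_inv: "w \<in> D \<Longrightarrow> rev (map iv w) @ w \<in> D \<and> Pi (rev (map iv w) @ w) = one"
  using pg unfolding partial_group_def by blast

lemma in_D_M: "w \<in> D \<Longrightarrow> x \<in> set w \<Longrightarrow> x \<in> M" using D_lists by auto

lemma one_eq: "one = Pi []" by (simp add: pg_one_def)
lemma one_M[simp]: "one \<in> M" using Pi_M[OF nil_D] one_eq by simp

lemma ins1: "u @ v \<in> D \<Longrightarrow> u @ [one] @ v \<in> D \<and> Pi (u @ [one] @ v) = Pi (u @ v)"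
  using coll[of u "[]" v] by (simp add: one_eq)

lemma sub_D: "u @ v @ w \<in> D \<Longrightarrow> v \<in> D"
  using app_D by blast

lemma coll_D: "u @ v @ w \<in> D \<Longrightarrow> u @ [Pi v] @ w \<in> D" using coll by blast
lemma coll_Pi: "u @ v @ w \<in> D \<Longrightarrow> Pi (u @ [Pi v] @ w) = Pi (u @ v @ w)" using coll by metis

definition winv :: "'a list \<Rightarrow> 'a list" where "winv w = rev (map iv w)"

lemma winv_D: "w \<in> D \<Longrightarrow> winv w \<in> D" using ax_inv app_D unfolding winv_def by blast
lemma winv_winv: "w \<in> lists M \<Longrightarrow> winv (winv w) = w"
  unfolding winv_def by (induct w) (auto simp: rev_map)
lemma winv_app: "winv (u @ v) = winv v @ winv u" unfolding winv_def by simp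
lemma winv_Cons: "winv (x # v) = winv v @ [iv x]" unfolding winv_def by simp
lemma winv_nil[simp]: "winv [] = []" unfolding winv_def by simp
lemma winv_sing[simp]: "winv [x] = [iv x]" unfolding winv_def by simp
lemma inv_w: "w \<in> D \<Longrightarrow> winv w @ w \<in> D \<and> Pi (winv w @ w) = one"
  using ax_inv unfolding winv_def by blast
lemma w_inv: "w \<in> D \<Longrightarrow> w @ winv w \<in> D \<and> Pi (w @ winv w) = one"
proof -
  assume w: "w \<in> D"
  have "winv w \<in> D" using winv_D w by blast
  from inv_w[OF this] show ?thesis using winv_winv D_lists w by simp
qed

lemma Pi_one_left: "x \<in> M \<Longrightarrow> Pi [one, x] = x"
  using ins1[of "[]" "[x]"] sing_D by simp
lemma Pi_one_right: "x \<in> M \<Longrightarrow> Pi [x, one] = x"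
  using ins1[of "[x]" "[]"] sing_D by simp
lemma one_one_D: "[one, one] \<in> D" using ins1[of "[]" "[one]"] sing_D by simp
lemma Pi_one_one: "Pi [one, one] = one" using Pi_one_left by simp

lemma pair_D: "[a, b] \<in> D \<Longrightarrow> a \<in> M \<and> b \<in> M" using D_lists by fastforce

lemma coll2: "u @ v \<in> D \<Longrightarrow> [Pi u, Pi v] \<in> D \<and> Pi [Pi u, Pi v] = Pi (u @ v)"
proof -
  assume h: "u @ v \<in> D"
  have a: "[] @ [Pi u] @ v \<in> D" "Pi ([] @ u @ v) = Pi ([] @ [Pi u] @ v)" using coll[of "[]" u v] h by auto
  have b: "[Pi u] @ [Pi v] @ [] \<in> D" "Pi ([Pi u] @ v @ []) = Pi ([Pi u] @ [Pi v] @ [])"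
    using coll[of "[Pi u]" v "[]"] a by auto
  show ?thesis using a b by simp
qed

lemma inv_unique: assumes "[a, b] \<in> D" "Pi [a, b] = one" shows "b = iv a"
proof -
  have M: "a \<in> M" "b \<in> M" using pair_D assms by auto
  have "winv [a,b] @ [a, b] \<in> D" using inv_w assms by blast
  hence "[iv b, iv a] @ [a, b] \<in> D" by (simp add: winv_def)
  hence d: "[iv a, a, b] \<in> D" using app_D[of "[iv b]" "[iv a, a, b]"] by simp
  have "Pi [iv a, a, b] = Pi ([] @ [Pi [iv a, a]] @ [b])" using coll[of "[]" "[iv a, a]" "[b]"] d by simp
  also have "Pi [iv a, a] = one" using inv_w[of "[a]"] sing_D M by simp
  finally have 1: "Pi [iv a, a, b] = b" using Pi_one_left M by simp
  have "Pi [iv a, a, b] = Pi ([iv a] @ [Pi [a, b]] @ [])" using coll[of "[iv a]" "[a, b]" "[]"] d by simp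
  hence "Pi [iv a, a, b] = iv a" using assms Pi_one_right iv_M M by simp
  thus ?thesis using 1 by simp
qed

lemma iv_one: "iv one = one"
  using inv_unique[OF one_one_D Pi_one_one] by simp

lemma Pi_winv: "w \<in> D \<Longrightarrow> Pi (winv w) = iv (Pi w)"
proof -
  assume w: "w \<in> D"
  have "[Pi (winv w), Pi w] \<in> D \<and> Pi [Pi (winv w), Pi w] = one" using coll2 inv_w[OF w] by metis
  hence "Pi w = iv (Pi (winv w))" using inv_unique by blast
  thus ?thesis using iv_iv Pi_M winv_D w by metis
qed

lemma Pi_x_ivx: "x \<in> M \<Longrightarrow> [x, iv x] \<in> D \<and> Pi [x, iv x] = one"
  using w_inv[of "[x]"] sing_D by simp
lemma Pi_ivx_x: "x \<in> M \<Longrightarrow> [iv x, x] \<in> D \<and> Pi [iv x, x] = one"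
  using inv_w[of "[x]"] sing_D by simp

lemma cancel_r: assumes "[y, s] \<in> D" shows "[y, s, iv s] \<in> D \<and> [Pi [y, s], iv s] \<in> D \<and> Pi [Pi [y, s], iv s] = y"
proof -
  have M: "y \<in> M" "s \<in> M" using pair_D assms by auto
  have "[y, s] @ winv [y, s] \<in> D" using w_inv assms by blast
  hence "[y, s, iv s] @ [iv y] \<in> D" by (simp add: winv_def)
  hence d: "[y, s, iv s] \<in> D" using app_D by blast
  have "Pi [y, s, iv s] = Pi ([y] @ [Pi [s, iv s]] @ [])" using coll[of "[y]" "[s, iv s]" "[]"] d by simp
  hence 1: "Pi [y, s, iv s] = y" using Pi_x_ivx M Pi_one_right by simp
  have 2: "[Pi [y, s], iv s] \<in> D \<and> Pi [y, s, iv s] = Pi [Pi [y, s], iv s]"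
    using coll[of "[]" "[y, s]" "[iv s]"] d by simp
  show ?thesis using d 1 2 by simp
qed

lemma cancel_l: assumes "[s, y] \<in> D" shows "[iv s, s, y] \<in> D \<and> [iv s, Pi [s, y]] \<in> D \<and> Pi [iv s, Pi [s, y]] = y"
proof -
  have M: "y \<in> M" "s \<in> M" using pair_D assms by auto
  have "winv [s, y] @ [s, y] \<in> D" using inv_w assms by blast
  hence "[iv y] @ [iv s, s, y] \<in> D" by (simp add: winv_def)
  hence d: "[iv s, s, y] \<in> D" using app_D by blast
  have "Pi [iv s, s, y] = Pi ([] @ [Pi [iv s, s]] @ [y])" using coll[of "[]" "[iv s, s]" "[y]"] d by simp
  hence 1: "Pi [iv s, s, y] = y" using Pi_ivx_x M Pi_one_left by simp
  have 2: "[iv s, Pi [s, y]] \<in> D \<and> Pi [iv s, s, y] = Pi [iv s, Pi [s, y]]"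
    using coll[of "[iv s]" "[s, y]" "[]"] d by simp
  show ?thesis using d 1 2 by simp
qed

lemma rcancel: "[y, s] \<in> D \<Longrightarrow> [y', s] \<in> D \<Longrightarrow> Pi [y, s] = Pi [y', s] \<Longrightarrow> y = y'"
  using cancel_r by metis

lemma w_invPi: "w \<in> D \<Longrightarrow> w @ [iv (Pi w)] \<in> D"
proof -
  assume w: "w \<in> D"
  have "w @ winv w @ [] \<in> D" using w_inv w by simp
  hence "w @ [Pi (winv w)] @ [] \<in> D" using coll_D by blast
  thus ?thesis using Pi_winv w by simp
qed

end


lemma length_ldel: "i < length a \<Longrightarrow> length (ldel i a) = length a - 1"
  unfolding ldel_def by simp
lemma nth_ldel: "i < length a \<Longrightarrow> j < length a - 1 \<Longrightarrow> ldel i a ! j = a ! coface i j"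
  unfolding ldel_def coface_def by (auto simp: nth_append min_def)
lemma length_ldup: "i < length a \<Longrightarrow> length (ldup i a) = Suc (length a)"
  unfolding ldup_def by simp
lemma nth_ldup: "i < length a \<Longrightarrow> j < Suc (length a) \<Longrightarrow> ldup i a ! j = a ! codeg i j"
  unfolding ldup_def codeg_def by (auto simp: nth_append min_def intro!: arg_cong[where f="(!) a"])

lemma ldel_map: "ldel i (map f a) = map f (ldel i a)" unfolding ldel_def by (simp add: take_map drop_map)
lemma ldup_map: "ldup i (map f a) = map f (ldup i a)" unfolding ldup_def by (simp add: take_map drop_map)

lemma sorted_nth: "sorted a \<Longrightarrow> i \<le> j \<Longrightarrow> j < length a \<Longrightarrow> a ! i \<le> a ! j"
  by (simp add: sorted_iff_nth_mono)

lemma dsimp_len: "a \<in> dsimp n k \<Longrightarrow> length a = Suc k" unfolding dsimp_def by simp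
lemma dsimp_le: "a \<in> dsimp n k \<Longrightarrow> j < length a \<Longrightarrow> a ! j \<le> n" unfolding dsimp_def by auto
lemma dsimp_sorted: "a \<in> dsimp n k \<Longrightarrow> sorted a" unfolding dsimp_def by auto

lemma dsimp_ldel: assumes a: "a \<in> dsimp n (Suc k)" and i: "i \<le> Suc k" shows "ldel i a \<in> dsimp n k"
proof -
  have la: "length a = Suc (Suc k)" using a dsimp_len by blast
  have l: "length (ldel i a) = Suc k" using length_ldel[of i a] la i by simp
  have s: "sorted (ldel i a)" unfolding sorted_iff_nth_mono
  proof (intro allI impI)
    fix p q assume pq: "p \<le> q" "q < length (ldel i a)"
    thus "ldel i a ! p \<le> ldel i a ! q" using nth_ldel[of i a] la i l sorted_nth[OF dsimp_sorted[OF a]]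
      by (simp add: coface_def)
  qed
  have b: "\<forall>j\<in>set (ldel i a). j \<le> n"
  proof
    fix j assume "j \<in> set (ldel i a)"
    then obtain p where "p < Suc k" "j = ldel i a ! p" using l by (metis in_set_conv_nth)
    thus "j \<le> n" using nth_ldel[of i a p] la i dsimp_le[OF a] by (simp add: coface_def)
  qed
  show ?thesis using l s b unfolding dsimp_def by simp
qed

lemma dsimp_ldup: assumes a: "a \<in> dsimp n k" and i: "i \<le> k" shows "ldup i a \<in> dsimp n (Suc k)"
proof -
  have la: "length a = Suc k" using a dsimp_len by blast
  have l: "length (ldup i a) = Suc (Suc k)" using length_ldup[of i a] la i by simp
  have s: "sorted (ldup i a)" unfolding sorted_iff_nth_mono
  proof (intro allI impI)
    fix p q assume pq: "p \<le> q" "q < length (ldup i a)"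
    thus "ldup i a ! p \<le> ldup i a ! q" using nth_ldup[of i a] la i l sorted_nth[OF dsimp_sorted[OF a]]
      by (simp add: codeg_def)
  qed
  have b: "\<forall>j\<in>set (ldup i a). j \<le> n"
  proof
    fix j assume "j \<in> set (ldup i a)"
    then obtain p where "p < Suc (Suc k)" "j = ldup i a ! p" using l by (metis in_set_conv_nth)
    thus "j \<le> n" using nth_ldup[of i a p] la i dsimp_le[OF a] by (simp add: codeg_def)
  qed
  show ?thesis using l s b unfolding dsimp_def by simp
qed

context pgrp begin

lemma Dk_iff: "w \<in> Dk G k \<longleftrightarrow> w \<in> D \<and> length w = k" unfolding Dk_def by simp

lemma split_inner: "0 < i \<Longrightarrow> i < length w \<Longrightarrow> w = take (i - 1) w @ [w ! (i - 1), w ! i] @ drop (Suc i) w"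
proof -
  assume i: "0 < i" "i < length w"
  have "w = take i w @ w ! i # drop (Suc i) w" using id_take_nth_drop i by blast
  moreover have "take i w = take (i - 1) w @ [w ! (i - 1)]" using i
    by (metis One_nat_def Suc_pred less_imp_le_nat take_Suc_conv_app_nth Suc_le_lessD)
  ultimately show ?thesis by simp
qed

lemma wface_inner: "0 < i \<Longrightarrow> i < Suc k \<Longrightarrow> wface G (Suc k) i w = take (i - 1) w @ [Pi [w ! (i - 1), w ! i]] @ drop (Suc i) w"
  unfolding wface_def by simp

lemma wface_D: assumes w: "w \<in> Dk G (Suc k)" and i: "i \<le> Suc k"
  shows "wface G (Suc k) i w \<in> Dk G k \<and> (0 < i \<and> i < Suc k \<longrightarrow> Pi (wface G (Suc k) i w) = Pi w)"
proof -
  have wD: "w \<in> D" and lw: "length w = Suc k" using w by (auto simp: Dk_def)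
  show ?thesis
  proof (cases "i = 0")
    case True
    obtain x w' where xw: "w = x # w'" using lw by (cases w) auto
    have "w' \<in> D" using app_D2[of "[x]" w'] wD xw by simp
    thus ?thesis using True xw lw unfolding wface_def Dk_def by simp
  next
    case False note i0 = this
    show ?thesis
    proof (cases "i = Suc k")
      case True
      obtain x w' where xw: "w = w' @ [x]" using lw by (cases w rule: rev_cases) auto
      have "w' \<in> D" using app_D1[of w' "[x]"] wD xw by simp
      thus ?thesis using True i0 xw lw unfolding wface_def Dk_def by simp
    next
      case False
      hence ik: "0 < i" "i < Suc k" using i i0 by auto
      have sp: "w = take (i - 1) w @ [w ! (i - 1), w ! i] @ drop (Suc i) w" by (rule split_inner) (use ik lw in auto)
      have c1: "take (i - 1) w @ [Pi [w ! (i - 1), w ! i]] @ drop (Suc i) w \<in> D"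
        using coll_D[of "take (i - 1) w" "[w ! (i - 1), w ! i]" "drop (Suc i) w"] sp wD by simp
      have c2: "Pi (take (i - 1) w @ [Pi [w ! (i - 1), w ! i]] @ drop (Suc i) w) = Pi w"
        using coll_Pi[of "take (i - 1) w" "[w ! (i - 1), w ! i]" "drop (Suc i) w"] sp wD by simp
      have l: "length (take (i - 1) w @ [Pi [w ! (i - 1), w ! i]] @ drop (Suc i) w) = k"
        using ik lw by simp
      show ?thesis unfolding wface_inner[OF ik] Dk_def using c1 c2 l by simp
    qed
  qed
qed

lemma wdeg_D: assumes w: "w \<in> Dk G k" and i: "i \<le> k"
  shows "wdeg G i w \<in> Dk G (Suc k) \<and> Pi (wdeg G i w) = Pi w"
  using ins1[of "take i w" "drop i w"] w i unfolding wdeg_def Dk_def by auto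

lemma Dk0: "w \<in> Dk G 0 \<longleftrightarrow> w = []" unfolding Dk_def by auto
lemma Dk1: "w \<in> Dk G (Suc 0) \<longleftrightarrow> (\<exists>x. w = [x] \<and> x \<in> M)"
  unfolding Dk_def using sing_D in_D_M by (auto simp: length_Suc_conv)

lemma Dk1_hd: "w \<in> Dk G (Suc 0) \<Longrightarrow> w = [hd w] \<and> hd w \<in> M" using Dk1 by auto

section \<open>Simplicial maps are letterwise\<close>

lemma len2: "length a = Suc (Suc 0) \<Longrightarrow> a = [a ! 0, a ! 1]"
  by (cases a; cases "tl a"; simp)
lemma hd_butlast2: "Suc (Suc 0) \<le> length x \<Longrightarrow> hd (butlast x) = hd x"
  by (cases x) auto
lemma ldel1_hd_last: assumes "Suc (Suc (Suc 0)) \<le> length a" shows "hd (ldel 1 a) = hd a" "last (ldel 1 a) = last a"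
proof -
  obtain x y r where a: "a = x # y # r" "r \<noteq> []" using assms by (cases a; cases "tl a"; force)
  show "hd (ldel 1 a) = hd a" "last (ldel 1 a) = last a" using a unfolding ldel_def by auto
qed

lemma smap_face: "prod_smap G n F \<Longrightarrow> a \<in> dsimp n (Suc k) \<Longrightarrow> w \<in> Dk G (Suc k) \<Longrightarrow> i \<le> Suc k \<Longrightarrow>
   F (ldel i a) (wface G (Suc k) i w) = wface G (Suc k) i (F a w)"
  unfolding prod_smap_def by blast
lemma smap_deg: "prod_smap G n F \<Longrightarrow> a \<in> dsimp n k \<Longrightarrow> w \<in> Dk G k \<Longrightarrow> i \<le> k \<Longrightarrow>
   F (ldup i a) (wdeg G i w) = wdeg G i (F a w)"
  unfolding prod_smap_def by blast
lemma smap_Dk: "prod_smap G n F \<Longrightarrow> a \<in> dsimp n k \<Longrightarrow> w \<in> Dk G k \<Longrightarrow> F a w \<in> Dk G k"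
  unfolding prod_smap_def by blast
lemma smap_undef: "prod_smap G n F \<Longrightarrow> \<not> prod_valid G n a w \<Longrightarrow> F a w = undefined"
  unfolding prod_smap_def by blast

lemma smap_hd: assumes F: "prod_smap G n F"
  shows "a \<in> dsimp n (Suc k) \<Longrightarrow> w \<in> Dk G (Suc k) \<Longrightarrow> hd (F a w) = hd (F [a ! 0, a ! 1] [w ! 0])"
proof (induct k arbitrary: a w)
  case 0
  have "a = [a ! 0, a ! 1]" using dsimp_len[OF 0(1)] len2 by simp
  moreover have "w = [w ! 0]" using 0(2) Dk1 by auto
  ultimately show ?case by simp
next
  case (Suc k)
  have la: "length a = Suc (Suc (Suc k))" using dsimp_len Suc(2) by blast
  have lw: "length w = Suc (Suc k)" using Suc(3) by (simp add: Dk_def)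
  have e: "F (ldel (Suc (Suc k)) a) (wface G (Suc (Suc k)) (Suc (Suc k)) w) = wface G (Suc (Suc k)) (Suc (Suc k)) (F a w)"
    using smap_face[OF F Suc(2) Suc(3)] by simp
  have ld: "ldel (Suc (Suc k)) a = butlast a" unfolding ldel_def using la by (simp add: butlast_conv_take)
  have wf: "\<And>v. wface G (Suc (Suc k)) (Suc (Suc k)) v = butlast v" unfolding wface_def by simp
  have a1: "butlast a \<in> dsimp n (Suc k)" using dsimp_ldel[OF Suc(2), of "Suc (Suc k)"] ld by simp
  have w1: "butlast w \<in> Dk G (Suc k)" using wface_D[OF Suc(3), of "Suc (Suc k)"] wf by simp
  have lF: "length (F a w) = Suc (Suc k)" using smap_Dk[OF F Suc(2) Suc(3)] by (simp add: Dk_def)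
  have "hd (F a w) = hd (butlast (F a w))" using lF hd_butlast2[of "F a w"] by simp
  also have "\<dots> = hd (F (butlast a) (butlast w))" using e ld wf by simp
  also have "\<dots> = hd (F [butlast a ! 0, butlast a ! 1] [butlast w ! 0])" using Suc(1)[OF a1 w1] .
  also have "\<dots> = hd (F [a ! 0, a ! 1] [w ! 0])" using la lw by (simp add: nth_butlast)
  finally show ?case .
qed

lemma smap_lw: assumes F: "prod_smap G n F"
  shows "a \<in> dsimp n k \<Longrightarrow> w \<in> Dk G k \<Longrightarrow> F a w = map (\<lambda>j. hd (F [a ! j, a ! Suc j] [w ! j])) [0..<k]"
proof (induct k arbitrary: a w)
  case 0 thus ?case using smap_Dk[OF F] Dk0 by auto
next
  case (Suc k)
  have la: "length a = Suc (Suc k)" using dsimp_len Suc(2) by blast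
  have lw: "length w = Suc k" using Suc(3) by (simp add: Dk_def)
  have lF: "length (F a w) = Suc k" using smap_Dk[OF F Suc(2) Suc(3)] by (simp add: Dk_def)
  have e: "F (ldel 0 a) (wface G (Suc k) 0 w) = wface G (Suc k) 0 (F a w)"
    using smap_face[OF F Suc(2) Suc(3)] by simp
  have ld: "ldel 0 a = tl a" unfolding ldel_def by (simp add: drop_Suc)
  have wf: "\<And>v. wface G (Suc k) 0 v = tl v" unfolding wface_def by simp
  have a1: "tl a \<in> dsimp n k" using dsimp_ldel[OF Suc(2), of 0] ld by simp
  have w1: "tl w \<in> Dk G k" using wface_D[OF Suc(3), of 0] wf by simp
  have t: "tl (F a w) = map (\<lambda>j. hd (F [tl a ! j, tl a ! Suc j] [tl w ! j])) [0..<k]"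
    using Suc(1)[OF a1 w1] e ld wf by simp
  have h: "hd (F a w) = hd (F [a ! 0, a ! 1] [w ! 0])" using smap_hd[OF F Suc(2) Suc(3)] .
  have "F a w = hd (F a w) # tl (F a w)" using lF by (cases "F a w") auto
  also have "\<dots> = map (\<lambda>j. hd (F [a ! j, a ! Suc j] [w ! j])) [0..<Suc k]"
    using t h la lw by (simp add: map_upt_Suc nth_tl del: upt_Suc)
  finally show ?case .
qed

lemma smap_lw_nth: "prod_smap G n F \<Longrightarrow> a \<in> dsimp n k \<Longrightarrow> w \<in> Dk G k \<Longrightarrow> j < k \<Longrightarrow>
  F a w ! j = hd (F [a ! j, a ! Suc j] [w ! j])"
  by (subst smap_lw[of n F a k w]) auto

lemma smap_long: assumes F: "prod_smap G n F"
  shows "a \<in> dsimp n (Suc k) \<Longrightarrow> w \<in> Dk G (Suc k) \<Longrightarrow> [Pi (F a w)] = F [hd a, last a] [Pi w]"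
proof (induct k arbitrary: a w)
  case 0
  have "a = [hd a, last a]" using dsimp_len[OF 0(1)] len2[of a] by (cases a; cases "tl a"; simp)
  moreover obtain x where x: "w = [x]" "x \<in> M" using 0(2) Dk1 by auto
  moreover obtain y where "F a w = [y]" "y \<in> M" using smap_Dk[OF F 0(1) 0(2)] Dk1 by auto
  ultimately show ?case by (metis Pi_sing)
next
  case (Suc k)
  have la: "length a = Suc (Suc (Suc k))" using dsimp_len Suc(2) by blast
  have e: "F (ldel 1 a) (wface G (Suc (Suc k)) 1 w) = wface G (Suc (Suc k)) 1 (F a w)"
    using smap_face[OF F Suc(2) Suc(3)] by simp
  have a1: "ldel 1 a \<in> dsimp n (Suc k)" using dsimp_ldel[OF Suc(2), of 1] by simp
  have w1: "wface G (Suc (Suc k)) 1 w \<in> Dk G (Suc k) \<and> Pi (wface G (Suc (Suc k)) 1 w) = Pi w"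
    using wface_D[OF Suc(3), of 1] by simp
  have Fw: "F a w \<in> Dk G (Suc (Suc k))" using smap_Dk[OF F Suc(2) Suc(3)] .
  have p: "Pi (wface G (Suc (Suc k)) 1 (F a w)) = Pi (F a w)" using wface_D[OF Fw, of 1] by simp
  have hl: "hd (ldel 1 a) = hd a" "last (ldel 1 a) = last a" using ldel1_hd_last[of a] la by simp_all
  have "[Pi (F a w)] = [Pi (F (ldel 1 a) (wface G (Suc (Suc k)) 1 w))]" using e p by simp
  also have "\<dots> = F [hd a, last a] [Pi w]" using Suc(1)[OF a1 conjunct1[OF w1]] w1 hl by simp
  finally show ?case .
qed

section \<open>Automorphisms as simplicial maps over Delta[0]\<close>

definition lift0 :: "('a list \<Rightarrow> 'a list) \<Rightarrow> nat list \<Rightarrow> 'a list \<Rightarrow> 'a list" where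
  "lift0 P = (\<lambda>a w. if prod_valid G 0 a w then P w else undefined)"

lemma dsimp0: "a \<in> dsimp 0 k \<longleftrightarrow> a = replicate (Suc k) 0"
proof
  assume "a \<in> dsimp 0 k"
  hence "length a = Suc k" "\<forall>j\<in>set a. j = 0" unfolding dsimp_def by auto
  thus "a = replicate (Suc k) 0" using replicate_eqI by metis
qed (auto simp: dsimp_def sorted_replicate)

lemma AutSet_D: "P \<in> AutSet G \<Longrightarrow> w \<in> Dk G k \<Longrightarrow> P w \<in> Dk G k"
  unfolding AutSet_def bij_betw_def by blast
lemma AutSet_undef: "P \<in> AutSet G \<Longrightarrow> w \<notin> D \<Longrightarrow> P w = undefined"
  unfolding AutSet_def by blast
lemma AutSet_bij: "P \<in> AutSet G \<Longrightarrow> bij_betw P (Dk G k) (Dk G k)"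
  unfolding AutSet_def by blast
lemma AutSet_face: "P \<in> AutSet G \<Longrightarrow> w \<in> Dk G (Suc k) \<Longrightarrow> i \<le> Suc k \<Longrightarrow> P (wface G (Suc k) i w) = wface G (Suc k) i (P w)"
  unfolding AutSet_def by blast
lemma AutSet_deg: "P \<in> AutSet G \<Longrightarrow> w \<in> Dk G k \<Longrightarrow> i \<le> k \<Longrightarrow> P (wdeg G i w) = wdeg G i (P w)"
  unfolding AutSet_def by blast

lemma prod_valid_iff: "prod_valid G n a w \<longleftrightarrow> a \<in> dsimp n (length w) \<and> w \<in> D"
  unfolding prod_valid_def Dk_def by auto

lemma lift0_smap: assumes P: "P \<in> AutSet G" shows "prod_smap G 0 (lift0 P)"
proof -
  have v: "\<And>a w k. a \<in> dsimp 0 k \<Longrightarrow> w \<in> Dk G k \<Longrightarrow> prod_valid G 0 a w" unfolding prod_valid_def by blast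
  show ?thesis unfolding prod_smap_def
  proof (intro conjI allI impI)
    fix k a w assume "a \<in> dsimp 0 k \<and> w \<in> Dk G k" thus "lift0 P a w \<in> Dk G k"
      using v AutSet_D[OF P] unfolding lift0_def by auto
  next
    fix a w assume "\<not> prod_valid G 0 a w" thus "lift0 P a w = undefined" unfolding lift0_def by simp
  next
    fix k a w i assume h: "a \<in> dsimp 0 (Suc k) \<and> w \<in> Dk G (Suc k) \<and> i \<le> Suc k"
    have "prod_valid G 0 (ldel i a) (wface G (Suc k) i w)" using v dsimp_ldel wface_D h by blast
    moreover have "prod_valid G 0 a w" using v h by blast
    ultimately show "lift0 P (ldel i a) (wface G (Suc k) i w) = wface G (Suc k) i (lift0 P a w)"
      using AutSet_face[OF P] h unfolding lift0_def by auto
  next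
    fix k a w i assume h: "a \<in> dsimp 0 k \<and> w \<in> Dk G k \<and> i \<le> k"
    have "prod_valid G 0 (ldup i a) (wdeg G i w)" using v dsimp_ldup wdeg_D h by blast
    moreover have "prod_valid G 0 a w" using v h by blast
    ultimately show "lift0 P (ldup i a) (wdeg G i w) = wdeg G i (lift0 P a w)"
      using AutSet_deg[OF P] h unfolding lift0_def by auto
  qed
qed

lemma rep_dsimp0: "replicate (Suc k) 0 \<in> dsimp 0 k" using dsimp0 by simp

lemma aut_lw: assumes P: "P \<in> AutSet G" and w: "w \<in> D" shows "P w = map (\<lambda>x. hd (P [x])) w"
proof -
  let ?k = "length w"
  have wk: "w \<in> Dk G ?k" using w by (simp add: Dk_def)
  have v: "\<And>a w k. a \<in> dsimp 0 k \<Longrightarrow> w \<in> Dk G k \<Longrightarrow> prod_valid G 0 a w" unfolding prod_valid_def by blast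
  have lj: "\<And>j. j < ?k \<Longrightarrow> lift0 P [0, 0] [w ! j] = P [w ! j]"
  proof -
    fix j assume j: "j < ?k"
    have "[w ! j] \<in> Dk G 1" using in_D_M[OF w] j sing_D by (simp add: Dk_def)
    moreover have "[0,0] \<in> dsimp 0 1" using rep_dsimp0[of 1] by (simp add: numeral_2_eq_2)
    ultimately show "lift0 P [0, 0] [w ! j] = P [w ! j]" using v unfolding lift0_def by auto
  qed
  have "P w = lift0 P (replicate (Suc ?k) 0) w" using v[OF rep_dsimp0 wk] unfolding lift0_def by simp
  also have "\<dots> = map (\<lambda>j. hd (lift0 P [replicate (Suc ?k) 0 ! j, replicate (Suc ?k) 0 ! Suc j] [w ! j])) [0..<?k]"
    using smap_lw[OF lift0_smap[OF P] rep_dsimp0 wk] .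
  also have "\<dots> = map (\<lambda>j. hd (P [w ! j])) [0..<?k]"
  proof (rule map_cong[OF refl])
    fix j assume "j \<in> set [0..<?k]"
    hence j: "j < ?k" by simp
    have "replicate (Suc ?k) (0::nat) ! j = 0" "replicate (Suc ?k) (0::nat) ! Suc j = 0" using j by (simp_all add: nth_replicate del: replicate_Suc)
    thus "hd (lift0 P [replicate (Suc ?k) 0 ! j, replicate (Suc ?k) 0 ! Suc j] [w ! j]) = hd (P [w ! j])"
      using lj[OF j] by simp
  qed
  also have "\<dots> = map (\<lambda>x. hd (P [x])) w" proof - have "map (\<lambda>j. hd (P [w ! j])) [0..<?k] = map ((\<lambda>x. hd (P [x])) \<circ> (\<lambda>j. w ! j)) [0..<?k]" by (simp add: comp_def) also have "\<dots> = map (\<lambda>x. hd (P [x])) (map (\<lambda>j. w ! j) [0..<?k])" by (simp only: map_map) finally show ?thesis by (simp only: map_nth) qed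

  finally show ?thesis .
qed

lemma aut_app: assumes "P \<in> AutSet G" "u @ v \<in> D" shows "P (u @ v) = P u @ P v"
proof -
  have "u \<in> D" "v \<in> D" using app_D[OF assms(2)] by auto
  have "P (u @ v) = map (\<lambda>x. hd (P [x])) (u @ v)" by (rule aut_lw[OF assms(1) assms(2)])
  also have "\<dots> = map (\<lambda>x. hd (P [x])) u @ map (\<lambda>x. hd (P [x])) v" by (rule map_append)
  also have "\<dots> = P u @ P v" using aut_lw[OF assms(1) \<open>u \<in> D\<close>] aut_lw[OF assms(1) \<open>v \<in> D\<close>] by (rule arg_cong2[where f="(@)", OF sym sym])
  finally show ?thesis .
qed

lemma aut_one: assumes P: "P \<in> AutSet G" shows "P [one] = [one]"
proof -
  have "P (wdeg G 0 []) = wdeg G 0 (P [])" using AutSet_deg[OF P, of "[]" 0 0] Dk0 by simp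
  moreover have "P [] = []" using AutSet_D[OF P, of "[]" 0] Dk0 by simp
  ultimately show ?thesis unfolding wdeg_def by simp
qed

lemma aut_Pi: assumes P: "P \<in> AutSet G" and w: "w \<in> D" shows "P [Pi w] = [Pi (P w)]"
proof (cases w)
  case Nil thus ?thesis using aut_one[OF P] AutSet_D[OF P, of "[]" 0] Dk0 one_eq by simp
next
  case (Cons x w')
  let ?k = "length w'"
  have wk: "w \<in> Dk G (Suc ?k)" using w Cons by (simp add: Dk_def)
  have v: "\<And>a w k. a \<in> dsimp 0 k \<Longrightarrow> w \<in> Dk G k \<Longrightarrow> prod_valid G 0 a w" unfolding prod_valid_def by blast
  have "[Pi (lift0 P (replicate (Suc (Suc ?k)) 0) w)] = lift0 P [hd (replicate (Suc (Suc ?k)) 0), last (replicate (Suc (Suc ?k)) 0)] [Pi w]"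
    using smap_long[OF lift0_smap[OF P] rep_dsimp0 wk] .
  moreover have "lift0 P (replicate (Suc (Suc ?k)) 0) w = P w" using v[OF rep_dsimp0 wk] unfolding lift0_def by simp
  moreover have "lift0 P [0, 0] [Pi w] = P [Pi w]"
  proof -
    have "[Pi w] \<in> Dk G 1" using Pi_M w sing_D by (simp add: Dk_def)
    moreover have "[0,0] \<in> dsimp 0 1" using rep_dsimp0[of 1] by (simp add: numeral_2_eq_2)
    ultimately show ?thesis using v unfolding lift0_def by auto
  qed
  ultimately show ?thesis by simp
qed

lemma aut_letter: "P \<in> AutSet G \<Longrightarrow> x \<in> M \<Longrightarrow> P [x] = [hd (P [x])] \<and> hd (P [x]) \<in> M"
  using AutSet_D[of P "[x]" 1] sing_D Dk1_hd by (simp add: Dk_def)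

end


context pgrp begin

definition pl :: "('a list \<Rightarrow> 'a list) \<Rightarrow> 'a \<Rightarrow> 'a" where "pl P = (\<lambda>x. hd (P [x]))"

lemma aut_pl: "P \<in> AutSet G \<Longrightarrow> x \<in> M \<Longrightarrow> P [x] = [pl P x] \<and> pl P x \<in> M"
  using aut_letter unfolding pl_def by blast

lemma aut_map: "P \<in> AutSet G \<Longrightarrow> w \<in> D \<Longrightarrow> P w = map (pl P) w"
  unfolding pl_def by (rule aut_lw)

lemma aut_Dk: "P \<in> AutSet G \<Longrightarrow> w \<in> D \<Longrightarrow> P w \<in> D \<and> length (P w) = length w"
  using AutSet_D[of P w "length w"] by (simp add: Dk_def)

lemma aut_inj_letter: assumes P: "P \<in> AutSet G" and xy: "x \<in> M" "y \<in> M" "pl P x = pl P y" shows "x = y"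
proof -
  have "inj_on P (Dk G 1)" using AutSet_bij[OF P] bij_betw_def by blast
  moreover have "[x] \<in> Dk G 1" "[y] \<in> Dk G 1" using xy sing_D by (auto simp: Dk_def)
  moreover have "P [x] = P [y]" using aut_pl[OF P] xy by metis
  ultimately show ?thesis by (meson inj_onD list.inject)
qed

lemma aut_surj_letter: assumes P: "P \<in> AutSet G" and y: "y \<in> M" shows "\<exists>x\<in>M. pl P x = y"
proof -
  have "[y] \<in> Dk G 1" using y sing_D by (auto simp: Dk_def)
  then obtain v where v: "v \<in> Dk G 1" "P v = [y]" using AutSet_bij[OF P] by (metis bij_betw_iff_bijections)
  then obtain x where "v = [x]" "x \<in> M" using Dk1 by auto
  thus ?thesis using v aut_pl[OF P] by (metis list.inject)
qed

lemma aut_pl_iv: assumes P: "P \<in> AutSet G" and x: "x \<in> M" shows "pl P (iv x) = iv (pl P x)"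
proof -
  have d: "[x, iv x] \<in> D" "Pi [x, iv x] = one" using Pi_x_ivx x by auto
  have "P [x, iv x] = [pl P x, pl P (iv x)]" using aut_map[OF P d(1)] by simp
  moreover have "P [x, iv x] \<in> D" using aut_Dk[OF P d(1)] by simp
  moreover have "P [Pi [x, iv x]] = [Pi (P [x, iv x])]" using aut_Pi[OF P d(1)] .
  ultimately have "[pl P x, pl P (iv x)] \<in> D" "Pi [pl P x, pl P (iv x)] = one" using d aut_one[OF P] by auto
  thus ?thesis using inv_unique by blast
qed

lemma aut_Pi_pl: assumes P: "P \<in> AutSet G" and w: "w \<in> D" shows "pl P (Pi w) = Pi (P w)"
  using aut_Pi[OF P w] unfolding pl_def by simp

definition ainv :: "('a list \<Rightarrow> 'a list) \<Rightarrow> 'a list \<Rightarrow> 'a list" where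
  "ainv P = (\<lambda>w. if w \<in> D then inv_into (Dk G (length w)) P w else undefined)"

lemma ainv_props: assumes P: "P \<in> AutSet G" and w: "w \<in> D"
  shows "ainv P w \<in> D \<and> length (ainv P w) = length w \<and> P (ainv P w) = w \<and> ainv P (P w) = w"
proof -
  have b: "bij_betw P (Dk G (length w)) (Dk G (length w))" using AutSet_bij[OF P] .
  have wk: "w \<in> Dk G (length w)" using w by (simp add: Dk_def)
  have 1: "inv_into (Dk G (length w)) P w \<in> Dk G (length w)" using b wk
    by (metis bij_betw_def inv_into_into)
  have 2: "P (inv_into (Dk G (length w)) P w) = w" using b wk by (meson bij_betw_inv_into_right)
  have 3: "P w \<in> D" "length (P w) = length w" using aut_Dk[OF P w] by auto
  have 4: "inv_into (Dk G (length w)) P (P w) = w" using b wk by (meson bij_betw_inv_into_left)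
  show ?thesis using 1 2 3 4 w unfolding ainv_def by (simp add: Dk_def)
qed

lemma inv_on_eq: assumes P: "P \<in> AutSet G" and v: "v \<in> D" and w: "w \<in> D" and e: "P v = w" shows "ainv P w = v"
  using ainv_props[OF P v] e by simp

lemma ainv_AutSet: assumes P: "P \<in> AutSet G" shows "ainv P \<in> AutSet G"
  unfolding AutSet_def
proof (intro CollectI conjI allI impI)
  fix w assume "w \<notin> D" thus "ainv P w = undefined" unfolding ainv_def by simp
next
  fix k show "bij_betw (ainv P) (Dk G k) (Dk G k)"
  proof (rule bij_betw_byWitness[where f'=P])
    show "\<forall>a\<in>Dk G k. P (ainv P a) = a" using ainv_props[OF P] by (simp add: Dk_def)
    show "\<forall>a\<in>Dk G k. ainv P (P a) = a" using ainv_props[OF P] by (simp add: Dk_def)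
    show "ainv P ` Dk G k \<subseteq> Dk G k" using ainv_props[OF P] by (auto simp: Dk_def)
    show "P ` Dk G k \<subseteq> Dk G k" using AutSet_D[OF P] by auto
  qed
next
  fix k w i assume h: "w \<in> Dk G (Suc k) \<and> i \<le> Suc k"
  let ?v = "ainv P w"
  have v: "?v \<in> Dk G (Suc k)" "P ?v = w" using ainv_props[OF P] h by (auto simp: Dk_def)
  have f: "wface G (Suc k) i ?v \<in> Dk G k" using wface_D v h by blast
  have "P (wface G (Suc k) i ?v) = wface G (Suc k) i w" using AutSet_face[OF P v(1)] h v by simp
  moreover have "wface G (Suc k) i w \<in> Dk G k" using wface_D h by blast
  ultimately show "ainv P (wface G (Suc k) i w) = wface G (Suc k) i (ainv P w)"
    using inv_on_eq[OF P] f by (simp add: Dk_def)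
next
  fix k w i assume h: "w \<in> Dk G k \<and> i \<le> k"
  let ?v = "ainv P w"
  have v: "?v \<in> Dk G k" "P ?v = w" using ainv_props[OF P] h by (auto simp: Dk_def)
  have f: "wdeg G i ?v \<in> Dk G (Suc k)" using wdeg_D v h by blast
  have "P (wdeg G i ?v) = wdeg G i w" using AutSet_deg[OF P v(1)] h v by simp
  moreover have "wdeg G i w \<in> Dk G (Suc k)" using wdeg_D h by blast
  ultimately show "ainv P (wdeg G i w) = wdeg G i (ainv P w)"
    using inv_on_eq[OF P] f by (simp add: Dk_def)
qed

lemma ainv_pl: assumes P: "P \<in> AutSet G" and x: "x \<in> M"
  shows "pl P (pl (ainv P) x) = x" "pl (ainv P) (pl P x) = x"
proof -
  have Q: "ainv P \<in> AutSet G" using ainv_AutSet[OF P] .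
  have "P (ainv P [x]) = [x]" "ainv P (P [x]) = [x]" using ainv_props[OF P] sing_D x by auto
  thus "pl P (pl (ainv P) x) = x" "pl (ainv P) (pl P x) = x"
    using aut_pl[OF P] aut_pl[OF Q] x by (metis list.inject)+
qed

lemma comp_AutSet: assumes P: "P \<in> AutSet G" and Q: "Q \<in> AutSet G" shows "aut_comp G P Q \<in> AutSet G"
  unfolding AutSet_def
proof (intro CollectI conjI allI impI)
  fix w assume "w \<notin> D" thus "aut_comp G P Q w = undefined" unfolding aut_comp_def by simp
next
  fix k
  have "bij_betw (P \<circ> Q) (Dk G k) (Dk G k)" using AutSet_bij[OF P] AutSet_bij[OF Q] by (rule bij_betw_trans[rotated])
  moreover have "\<And>w. w \<in> Dk G k \<Longrightarrow> (P \<circ> Q) w = aut_comp G P Q w" unfolding aut_comp_def by (simp add: Dk_def)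
  ultimately show "bij_betw (aut_comp G P Q) (Dk G k) (Dk G k)" by (rule bij_betw_cong[THEN iffD1, rotated])
next
  fix k w i assume h: "w \<in> Dk G (Suc k) \<and> i \<le> Suc k"
  have q: "Q w \<in> Dk G (Suc k)" using AutSet_D[OF Q] h by blast
  have f1: "wface G (Suc k) i w \<in> D" using wface_D h by (simp add: Dk_def)
  have wD: "w \<in> D" using h by (simp add: Dk_def)
  have "aut_comp G P Q (wface G (Suc k) i w) = P (Q (wface G (Suc k) i w))" unfolding aut_comp_def using f1 by simp
  also have "\<dots> = P (wface G (Suc k) i (Q w))" using AutSet_face[OF Q, of w k i] h by simp
  also have "\<dots> = wface G (Suc k) i (P (Q w))" using AutSet_face[OF P q] h by simp
  also have "\<dots> = wface G (Suc k) i (aut_comp G P Q w)" unfolding aut_comp_def using wD by simp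
  finally show "aut_comp G P Q (wface G (Suc k) i w) = wface G (Suc k) i (aut_comp G P Q w)" .
next
  fix k w i assume h: "w \<in> Dk G k \<and> i \<le> k"
  have q: "Q w \<in> Dk G k" using AutSet_D[OF Q] h by blast
  have f1: "wdeg G i w \<in> D" using wdeg_D h by (simp add: Dk_def)
  have wD: "w \<in> D" using h by (simp add: Dk_def)
  have "aut_comp G P Q (wdeg G i w) = P (Q (wdeg G i w))" unfolding aut_comp_def using f1 by simp
  also have "\<dots> = P (wdeg G i (Q w))" using AutSet_deg[OF Q, of w k i] h by simp
  also have "\<dots> = wdeg G i (P (Q w))" using AutSet_deg[OF P q] h by simp
  also have "\<dots> = wdeg G i (aut_comp G P Q w)" unfolding aut_comp_def using wD by simp
  finally show "aut_comp G P Q (wdeg G i w) = wdeg G i (aut_comp G P Q w)" .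
qed

lemma comp_pl: assumes P: "P \<in> AutSet G" and Q: "Q \<in> AutSet G" and x: "x \<in> M" shows "pl (aut_comp G P Q) x = pl P (pl Q x)"
proof -
  have "aut_comp G P Q [x] = P (Q [x])" unfolding aut_comp_def using sing_D[OF x] by simp
  also have "\<dots> = [pl P (pl Q x)]" using aut_pl[OF Q x] aut_pl[OF P] by metis
  finally show ?thesis unfolding pl_def by simp
qed

lemma aut_eqI: assumes P: "P \<in> AutSet G" and Q: "Q \<in> AutSet G" and e: "\<And>x. x \<in> M \<Longrightarrow> pl P x = pl Q x"
  shows "P = Q"
proof
  fix w show "P w = Q w"
  proof (cases "w \<in> D")
    case True thus ?thesis using aut_map[OF P True] aut_map[OF Q True] e in_D_M[OF True] by simp
  next
    case False thus ?thesis using AutSet_undef[OF P] AutSet_undef[OF Q] by simp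
  qed
qed

end


lemma sorted01: "sorted c \<Longrightarrow> set c \<subseteq> {0, 1::nat} \<Longrightarrow>
  \<exists>z\<le>length c. c = replicate z 0 @ replicate (length c - z) 1"
proof (induct c)
  case Nil thus ?case by simp
next
  case (Cons x c)
  have s: "sorted c" "set c \<subseteq> {0, 1}" using Cons(2) Cons(3) by auto
  obtain z where z: "z \<le> length c" "c = replicate z 0 @ replicate (length c - z) 1" using Cons(1)[OF s] by blast
  show ?case
  proof (cases "x = 0")
    case True
    have "x # c = replicate (Suc z) 0 @ replicate (length (x # c) - Suc z) 1" using z True by simp
    moreover have "Suc z \<le> length (x # c)" using z by simp
    ultimately show ?thesis by blast
  next
    case False
    hence x: "x = 1" using Cons(3) by auto
    have "\<forall>y\<in>set c. y = 1" using Cons(2) Cons(3) x by fastforce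
    hence "c = replicate (length c) 1" by (simp add: replicate_eqI)
    hence "x # c = replicate 0 0 @ replicate (length (x # c) - 0) 1" using x by simp
    thus ?thesis by blast
  qed
qed

lemma dsimp1_char: assumes "c \<in> dsimp 1 k" shows "\<exists>z\<le>Suc k. c = replicate z 0 @ replicate (Suc k - z) 1"
proof -
  have "sorted c" "set c \<subseteq> {0, 1}" "length c = Suc k" using assms unfolding dsimp_def by auto
  thus ?thesis using sorted01[of c] by simp
qed

lemma rep01_dsimp: "z \<le> Suc k \<Longrightarrow> replicate z 0 @ replicate (Suc k - z) 1 \<in> dsimp 1 k"
  unfolding dsimp_def by (auto simp: sorted_append)

lemma rep01_nth: "z \<le> Suc k \<Longrightarrow> j < Suc k \<Longrightarrow> (replicate z 0 @ replicate (Suc k - z) (1::nat)) ! j = (if j < z then 0 else 1)"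
  by (simp add: nth_append)

definition (in pgrp) homot :: "('a list \<Rightarrow> 'a list) \<Rightarrow> ('a list \<Rightarrow> 'a list) \<Rightarrow> 'a \<Rightarrow> (nat list \<Rightarrow> 'a list \<Rightarrow> 'a list) \<Rightarrow> bool" where
  "homot Phi Psi e F \<longleftrightarrow> prod_smap G 1 F \<and>
        (\<forall>k w. w \<in> Dk G k \<longrightarrow> F (replicate (Suc k) 0) w = Phi w) \<and>
        (\<forall>k w. w \<in> Dk G k \<longrightarrow> F (replicate (Suc k) 1) w = Psi w) \<and>
        F [0, 1] (wdeg G 0 []) = [e]"

lemma (in pgrp) aut_hom_iff: "aut_hom G Psi Phi = {e. e \<in> normalizer G \<and> (\<exists>F. homot Phi Psi e F)}"
  unfolding aut_hom_def homot_def by (rule refl)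

locale hom = pgrp +
  fixes Phi Psi e F
  assumes Phi: "Phi \<in> AutSet G" and Psi: "Psi \<in> AutSet G" and H: "homot Phi Psi e F"
begin

lemma Fs: "prod_smap G 1 F" using H unfolding homot_def by blast
lemma F0: "w \<in> Dk G k \<Longrightarrow> F (replicate (Suc k) 0) w = Phi w" using H unfolding homot_def by blast
lemma F1: "w \<in> Dk G k \<Longrightarrow> F (replicate (Suc k) 1) w = Psi w" using H unfolding homot_def by blast
lemma Fe: "F [0, 1] [one] = [e]" using H unfolding homot_def wdeg_def by simp

lemma d01: "[0, 1] \<in> dsimp 1 (Suc 0)" unfolding dsimp_def by simp
lemma d00: "[0, 0] \<in> dsimp 1 (Suc 0)" unfolding dsimp_def by simp
lemma d11: "[1, 1] \<in> dsimp 1 (Suc 0)" unfolding dsimp_def by simp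
lemma d001: "[0, 0, 1] \<in> dsimp 1 (Suc (Suc 0))" unfolding dsimp_def by simp
lemma d011: "[0, 1, 1] \<in> dsimp 1 (Suc (Suc 0))" unfolding dsimp_def by simp
lemma sing_Dk: "x \<in> M \<Longrightarrow> [x] \<in> Dk G (Suc 0)" using sing_D by (simp add: Dk_def)

lemma e_M: "e \<in> M"
proof -
  have "F [0,1] [one] \<in> Dk G (Suc 0)" using smap_Dk[OF Fs d01 sing_Dk[OF one_M]] .
  thus ?thesis using Fe Dk1 by auto
qed

lemma F00: "x \<in> M \<Longrightarrow> F [0, 0] [x] = [pl Phi x]"
  using F0[OF sing_Dk, of x] aut_pl[OF Phi] by (simp add: numeral_2_eq_2)
lemma F11: "x \<in> M \<Longrightarrow> F [1, 1] [x] = [pl Psi x]"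
  using F1[OF sing_Dk, of x] aut_pl[OF Psi] by (simp add: numeral_2_eq_2)

lemma F01a: assumes x: "x \<in> M" shows "[pl Phi x, e] \<in> D \<and> F [0, 1] [x] = [Pi [pl Phi x, e]]"
proof -
  have w: "[x, one] \<in> Dk G (Suc (Suc 0))" using ins1[of "[x]" "[]"] sing_D[OF x] by (simp add: Dk_def)
  have "F [0,0,1] [x, one] = map (\<lambda>j. hd (F [[0,0,1] ! j, [0,0,1] ! Suc j] [[x, one] ! j])) [0..<Suc (Suc 0)]"
    using smap_lw[OF Fs d001 w] .
  also have "\<dots> = [pl Phi x, e]" using F00[OF x] Fe by simp
  finally have e1: "F [0,0,1] [x, one] = [pl Phi x, e]" .
  have "[Pi (F [0,0,1] [x, one])] = F [hd [0,0,1], last [0,0,1]] [Pi [x, one]]" using smap_long[OF Fs d001 w] .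
  hence "F [0, 1] [x] = [Pi [pl Phi x, e]]" using e1 Pi_one_right[OF x] by simp
  moreover have "[pl Phi x, e] \<in> D" using smap_Dk[OF Fs d001 w] e1 by (simp add: Dk_def)
  ultimately show ?thesis by simp
qed

lemma F01b: assumes x: "x \<in> M" shows "[e, pl Psi x] \<in> D \<and> F [0, 1] [x] = [Pi [e, pl Psi x]]"
proof -
  have w: "[one, x] \<in> Dk G (Suc (Suc 0))" using ins1[of "[]" "[x]"] sing_D[OF x] by (simp add: Dk_def)
  have "F [0,1,1] [one, x] = map (\<lambda>j. hd (F [[0,1,1] ! j, [0,1,1] ! Suc j] [[one, x] ! j])) [0..<Suc (Suc 0)]"
    using smap_lw[OF Fs d011 w] .
  also have "\<dots> = [e, pl Psi x]" using F11[OF x] Fe by simp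
  finally have e1: "F [0,1,1] [one, x] = [e, pl Psi x]" .
  have "[Pi (F [0,1,1] [one, x])] = F [hd [0,1,1], last [0,1,1]] [Pi [one, x]]" using smap_long[OF Fs d011 w] .
  hence "F [0, 1] [x] = [Pi [e, pl Psi x]]" using e1 Pi_one_left[OF x] by simp
  moreover have "[e, pl Psi x] \<in> D" using smap_Dk[OF Fs d011 w] e1 by (simp add: Dk_def)
  ultimately show ?thesis by simp
qed

lemma comm: "x \<in> M \<Longrightarrow> Pi [pl Phi x, e] = Pi [e, pl Psi x]" using F01a F01b by fastforce

definition hlet :: "nat \<Rightarrow> 'a list \<Rightarrow> nat \<Rightarrow> 'a" where
  "hlet z y j = (if Suc j < z then pl Phi (y ! j) else if Suc j = z then Pi [pl Phi (y ! j), e] else pl Psi (y ! j))"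

lemma F_rep: assumes z: "z \<le> Suc k" and y: "y \<in> Dk G k"
  shows "F (replicate z 0 @ replicate (Suc k - z) 1) y = map (hlet z y) [0..<k]"
proof -
  let ?c = "replicate z 0 @ replicate (Suc k - z) (1::nat)"
  have yM: "\<And>j. j < k \<Longrightarrow> y ! j \<in> M" using y in_D_M by (auto simp: Dk_def)
  have "F ?c y = map (\<lambda>j. hd (F [?c ! j, ?c ! Suc j] [y ! j])) [0..<k]" using smap_lw[OF Fs rep01_dsimp[OF z] y] .
  also have "\<dots> = map (hlet z y) [0..<k]"
  proof (rule map_cong[OF refl])
    fix j assume "j \<in> set [0..<k]" hence j: "j < k" by simp
    have c1: "?c ! j = (if j < z then 0 else 1)" "?c ! Suc j = (if Suc j < z then 0 else 1)"
      using rep01_nth[OF z] j by auto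
    show "hd (F [?c ! j, ?c ! Suc j] [y ! j]) = hlet z y j"
      unfolding c1 hlet_def using F00[OF yM[OF j]] F11[OF yM[OF j]] F01a[OF yM[OF j]] by auto
  qed
  finally show ?thesis .
qed

lemma HL: assumes uu: "u @ u' \<in> D"
  shows "map (pl Phi) u @ [e] @ map (pl Psi) u' \<in> D \<and>
         Pi (map (pl Phi) u @ [e] @ map (pl Psi) u') = Pi [pl Phi (Pi (u @ u')), e]"
proof -
  let ?k = "Suc (length u + length u')" and ?z = "Suc (length u)"
  let ?y = "u @ [one] @ u'"
  have y: "?y \<in> Dk G ?k" using ins1[OF uu] by (simp add: Dk_def)
  have z: "?z \<le> Suc ?k" by simp
  have uM: "\<And>x. x \<in> set u \<Longrightarrow> x \<in> M" "\<And>x. x \<in> set u' \<Longrightarrow> x \<in> M" using in_D_M[OF uu] by auto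
  have "F (replicate ?z 0 @ replicate (Suc ?k - ?z) 1) ?y = map (hlet ?z ?y) [0..<?k]" using F_rep[OF z y] .
  also have "\<dots> = map (pl Phi) u @ [e] @ map (pl Psi) u'"
  proof (rule nth_equalityI)
    show "length (map (hlet ?z ?y) [0..<?k]) = length (map (pl Phi) u @ [e] @ map (pl Psi) u')" by simp
  next
    fix j assume "j < length (map (hlet ?z ?y) [0..<?k])" hence j: "j < ?k" by simp
    have p1: "pl Phi one = one" using aut_one[OF Phi] unfolding pl_def by simp
    have "j < length u \<or> j = length u \<or> (length u < j \<and> j < ?k)" using j by auto
    thus "map (hlet ?z ?y) [0..<?k] ! j = (map (pl Phi) u @ [e] @ map (pl Psi) u') ! j"
    proof (elim disjE conjE)
      assume j1: "j < length u" thus ?thesis unfolding hlet_def by (simp add: nth_append)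
    next
      assume j1: "j = length u" thus ?thesis using p1 Pi_one_left[OF e_M] unfolding hlet_def by (simp add: nth_append)
    next
      assume j1: "length u < j" "j < ?k"
      then obtain t where t: "j = Suc (length u) + t" "t < length u'" by (metis add_Suc less_imp_Suc_add add_less_cancel_left add_Suc_right)
      have a: "\<not> Suc t < length u' \<Longrightarrow> length u' - Suc 0 = t" "u' \<noteq> []" using t by auto
      show ?thesis using t a unfolding hlet_def by (simp add: nth_append)
    qed
  qed
  finally have e1: "F (replicate ?z 0 @ replicate (Suc ?k - ?z) 1) ?y = map (pl Phi) u @ [e] @ map (pl Psi) u'" .
  have "[Pi (F (replicate ?z 0 @ replicate (Suc ?k - ?z) 1) ?y)] =
        F [hd (replicate ?z 0 @ replicate (Suc ?k - ?z) 1), last (replicate ?z 0 @ replicate (Suc ?k - ?z) (1::nat))] [Pi ?y]"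
    using smap_long[OF Fs _ y] rep01_dsimp[OF z] by simp
  moreover have "hd (replicate ?z 0 @ replicate (Suc ?k - ?z) (1::nat)) = 0" by simp
  moreover have "last (replicate ?z 0 @ replicate (Suc ?k - ?z) (1::nat)) = 1" by simp
  moreover have "Pi ?y = Pi (u @ u')" using ins1[OF uu] by simp
  ultimately have "[Pi (map (pl Phi) u @ [e] @ map (pl Psi) u')] = F [0, 1] [Pi (u @ u')]" using e1 by simp
  also have "\<dots> = [Pi [pl Phi (Pi (u @ u')), e]]" using F01a[OF Pi_M[OF uu]] by simp
  finally show ?thesis using smap_Dk[OF Fs rep01_dsimp[OF z] y] e1 by (simp add: Dk_def)
qed

end


context hom begin

lemma ainvPsi: "ainv Psi \<in> AutSet G" using ainv_AutSet[OF Psi] .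
lemma ainvPhi: "ainv Phi \<in> AutSet G" using ainv_AutSet[OF Phi] .

lemma I1: assumes x: "x \<in> M" shows "[e, x, iv e] \<in> D \<and> Pi [e, x, iv e] = pl Phi (pl (ainv Psi) x)"
proof -
  define y where "y = pl (ainv Psi) x"
  have y: "y \<in> M" "pl Psi y = x" using aut_pl[OF ainvPsi x] ainv_pl[OF Psi x] unfolding y_def by auto
  define c where "c = pl Phi y"
  have c: "c \<in> M" "pl Phi (iv y) = iv c" using aut_pl[OF Phi y(1)] aut_pl_iv[OF Phi y(1)] unfolding c_def by auto
  have d: "[iv y, y] \<in> D" "Pi [iv y, y] = one" using Pi_ivx_x[OF y(1)] by auto
  have h: "map (pl Phi) [iv y] @ [e] @ map (pl Psi) [y] \<in> D \<and>
         Pi (map (pl Phi) [iv y] @ [e] @ map (pl Psi) [y]) = Pi [pl Phi (Pi ([iv y] @ [y])), e]"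
    using HL[of "[iv y]" "[y]"] d by simp
  have p1: "pl Phi one = one" using aut_one[OF Phi] unfolding pl_def by simp
  have h1: "[iv c, e, x] \<in> D" "Pi [iv c, e, x] = e" using h c y d p1 Pi_one_left[OF e_M] by auto
  have "[iv c, e, x] @ [iv (Pi [iv c, e, x])] \<in> D" using w_invPi[OF h1(1)] .
  hence "[iv c] @ [e, x, iv e] \<in> D" using h1 by simp
  hence D1: "[e, x, iv e] \<in> D" by (rule app_D2)
  have "Pi [e, x, iv e] = Pi ([] @ [Pi [e, x]] @ [iv e])" using coll_Pi[of "[]" "[e, x]" "[iv e]"] D1 by simp
  also have "Pi [e, x] = Pi [c, e]" using comm[OF y(1)] y unfolding c_def by simp
  also have "Pi ([] @ [Pi [c, e]] @ [iv e]) = c" using cancel_r[of c e] F01a[OF y(1)] unfolding c_def by simp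
  finally show ?thesis using D1 unfolding c_def y_def by simp
qed

lemma conjw: assumes w: "w \<in> D" and i: "i \<le> length w"
  shows "conj_word G e i w \<in> D \<and> Pi (conj_word G e i w) = Pi [pl Phi (Pi (ainv Psi w)), e]"
proof -
  let ?v = "ainv Psi w"
  have v: "?v \<in> D" "?v = map (pl (ainv Psi)) w" using ainv_props[OF Psi w] aut_map[OF ainvPsi w] by auto
  have vv: "take i ?v @ drop i ?v \<in> D" using v by simp
  have h: "map (pl Phi) (take i ?v) @ [e] @ map (pl Psi) (drop i ?v) \<in> D \<and>
    Pi (map (pl Phi) (take i ?v) @ [e] @ map (pl Psi) (drop i ?v)) = Pi [pl Phi (Pi (take i ?v @ drop i ?v)), e]"
    using HL[OF vv] .
  have wM: "\<And>x. x \<in> set w \<Longrightarrow> x \<in> M" using in_D_M[OF w] .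
  have a: "map (pl Phi) (take i ?v) = map (\<lambda>x. Pi [e, x, iv e]) (take i w)"
    unfolding v(2) take_map map_map comp_def using I1 wM by (auto dest: in_set_takeD)
  have b: "map (pl Psi) (drop i ?v) = drop i w"
  proof -
    have "map (pl Psi) (drop i ?v) = map (\<lambda>x. pl Psi (pl (ainv Psi) x)) (drop i w)"
      unfolding v(2) drop_map map_map comp_def ..
    also have "\<dots> = drop i w" by (rule map_idI) (use ainv_pl(1)[OF Psi] wM in \<open>auto dest: in_set_dropD\<close>)
    finally show ?thesis .
  qed
  show ?thesis using h unfolding conj_word_def a b by simp
qed

lemma e_norm: "e \<in> normalizer G"
  unfolding normalizer_def
proof (intro CollectI conjI ballI allI impI)
  show "e \<in> M" by (rule e_M)
next
  fix x assume "x \<in> M" thus "[e, x, iv e] \<in> D" using I1 by blast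
next
  show "\<exists>P\<in>AutSet G. \<forall>x\<in>M. P [x] = [Pi [e, x, iv e]]"
  proof (intro bexI ballI)
    fix x assume x: "x \<in> M"
    have P: "aut_comp G Phi (ainv Psi) \<in> AutSet G" using comp_AutSet[OF Phi ainvPsi] .
    have "aut_comp G Phi (ainv Psi) [x] = [pl (aut_comp G Phi (ainv Psi)) x]" using aut_pl[OF P x] by simp
    also have "\<dots> = [Pi [e, x, iv e]]" using comp_pl[OF Phi ainvPsi x] I1[OF x] by simp
    finally show "aut_comp G Phi (ainv Psi) [x] = [Pi [e, x, iv e]]" .
  qed (rule comp_AutSet[OF Phi ainvPsi])
next
  fix w i assume "w \<in> D" "i \<le> length w" thus "conj_word G e i w \<in> D" using conjw by blast
next
  fix w i j assume "w \<in> D" "i \<le> length w" "j \<le> length w"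
  thus "Pi (conj_word G e i w) = Pi (conj_word G e j w)" using conjw by metis
qed


lemma hlet_Dk: "z \<le> Suc k \<Longrightarrow> y \<in> Dk G k \<Longrightarrow> map (hlet z y) [0..<k] \<in> Dk G k"
  using F_rep smap_Dk[OF Fs rep01_dsimp] by metis

lemma F_inj: assumes z: "z \<le> Suc k" shows "inj_on (F (replicate z 0 @ replicate (Suc k - z) 1)) (Dk G k)"
proof (rule inj_onI)
  fix y y' assume y: "y \<in> Dk G k" and y': "y' \<in> Dk G k"
    and eq: "F (replicate z 0 @ replicate (Suc k - z) 1) y = F (replicate z 0 @ replicate (Suc k - z) 1) y'"
  hence eq2: "map (hlet z y) [0..<k] = map (hlet z y') [0..<k]" using F_rep[OF z] by metis
  have ly: "length y = k" "length y' = k" using y y' by (auto simp: Dk_def)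
  have yM: "\<And>j. j < k \<Longrightarrow> y ! j \<in> M \<and> y' ! j \<in> M" using y y' in_D_M ly by (auto simp: Dk_def)
  show "y = y'"
  proof (rule nth_equalityI)
    show "length y = length y'" using ly by simp
  next
    fix j assume "j < length y" hence j: "j < k" using ly by simp
    have hj: "hlet z y j = hlet z y' j" using eq2 j by (metis length_map length_upt minus_nat.diff_0 nth_map_upt add_0)
    have a: "y ! j \<in> M" "y' ! j \<in> M" using yM[OF j] by auto
    show "y ! j = y' ! j"
    proof (cases "Suc j < z")
      case True thus ?thesis using hj aut_inj_letter[OF Phi a] unfolding hlet_def by simp
    next
      case False note f = this
      show ?thesis
      proof (cases "Suc j = z")
        case True
        hence "Pi [pl Phi (y ! j), e] = Pi [pl Phi (y' ! j), e]" using hj f unfolding hlet_def by simp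
        hence "pl Phi (y ! j) = pl Phi (y' ! j)" using rcancel F01a a by blast
        thus ?thesis using aut_inj_letter[OF Phi a] by simp
      next
        case False thus ?thesis using hj f aut_inj_letter[OF Psi a] unfolding hlet_def by simp
      qed
    qed
  qed
qed

lemma rev_take': "m \<le> length xs \<Longrightarrow> take m (rev xs) = rev (drop (length xs - m) xs)"
  by (simp add: rev_drop)
lemma rev_drop': "m \<le> length xs \<Longrightarrow> drop m (rev xs) = rev (take (length xs - m) xs)"
  by (simp add: rev_take)

lemma zz_D: assumes v: "v \<in> Dk G k" and p: "p < k"
  shows "take p v @ [Pi [v ! p, iv e]] @ map (\<lambda>x. Pi [e, x, iv e]) (drop (Suc p) v) \<in> D \<and> [v ! p, iv e] \<in> D"
proof -
  let ?cj = "\<lambda>x. Pi [e, x, iv e]"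
  have vD: "v \<in> D" and lv: "length v = k" using v by (auto simp: Dk_def)
  have vM: "\<And>x. x \<in> set v \<Longrightarrow> x \<in> M" using in_D_M[OF vD] .
  have W: "winv v \<in> D" "length (winv v) = k" using winv_D[OF vD] lv by (auto simp: winv_def)
  have R: "conj_word G e (k - Suc p) (winv v) \<in> D" using conjw[OF W(1)] W(2) by simp
  have t1: "take (k - Suc p) (winv v) = winv (drop (Suc p) v)"
    unfolding winv_def using rev_take'[of "k - Suc p" "map iv v"] lv p by (simp add: drop_map)
  have t2: "drop (k - Suc p) (winv v) = iv (v ! p) # winv (take p v)"
  proof -
    have "drop (k - Suc p) (winv v) = rev (take (Suc p) (map iv v))"
      unfolding winv_def using rev_drop'[of "k - Suc p" "map iv v"] lv p by simp
    also have "take (Suc p) (map iv v) = map iv (take p v) @ [iv (v ! p)]"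
      using p lv by (simp add: take_Suc_conv_app_nth take_map)
    finally show ?thesis unfolding winv_def by simp
  qed
  define A where "A = map ?cj (winv (drop (Suc p) v))"
  define B where "B = winv (take p v)"
  have R': "A @ [e, iv (v ! p)] @ B \<in> D" using R unfolding conj_word_def t1 t2 A_def B_def by simp
  have ev: "[e, iv (v ! p)] \<in> D" using sub_D[OF R'] .
  have R2: "A @ [Pi [e, iv (v ! p)]] @ B \<in> D" using coll_D[OF R'] .
  have R3: "winv B @ [iv (Pi [e, iv (v ! p)])] @ winv A \<in> D" using winv_D[OF R2] by (simp add: winv_app winv_Cons)
  have vp: "v ! p \<in> M" using vM p lv by simp
  have e1: "winv B = take p v" unfolding B_def by (rule winv_winv) (use vM in \<open>auto dest: in_set_takeD\<close>)
  have e2: "iv (Pi [e, iv (v ! p)]) = Pi [v ! p, iv e]"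
    using Pi_winv[OF ev] vp by (simp add: winv_def)
  have e3: "winv A = map ?cj (drop (Suc p) v)"
  proof -
    have "winv A = map (\<lambda>x. iv (?cj (iv x))) (drop (Suc p) v)"
      unfolding A_def winv_def by (simp add: rev_map map_map comp_def)
    also have "\<dots> = map ?cj (drop (Suc p) v)"
    proof (rule map_cong[OF refl])
      fix x assume "x \<in> set (drop (Suc p) v)" hence x: "x \<in> M" using vM by (auto dest: in_set_dropD)
      have d: "[e, iv x, iv e] \<in> D" using I1 iv_M[OF x] by blast
      show "iv (?cj (iv x)) = ?cj x" using Pi_winv[OF d] x e_M by (simp add: winv_def)
    qed
    finally show ?thesis .
  qed
  have "take p v @ [Pi [v ! p, iv e]] @ map ?cj (drop (Suc p) v) \<in> D" using R3 e1 e2 e3 by simp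
  moreover have "[v ! p, iv e] \<in> D"
  proof -
    have "winv [e, iv (v ! p)] \<in> D" using winv_D[OF ev] .
    thus ?thesis using vp by (simp add: winv_def)
  qed
  ultimately show ?thesis by blast
qed

lemma F_surj: assumes z: "0 < z" "z \<le> k" and v: "v \<in> Dk G k"
  shows "\<exists>y\<in>Dk G k. F (replicate z 0 @ replicate (Suc k - z) 1) y = v"
proof -
  let ?cj = "\<lambda>x. Pi [e, x, iv e]"
  define p where "p = z - 1"
  have p: "p < k" "Suc p = z" using z unfolding p_def by auto
  have vD: "v \<in> D" and lv: "length v = k" using v by (auto simp: Dk_def)
  have vM: "\<And>j. j < k \<Longrightarrow> v ! j \<in> M" using in_D_M[OF vD] lv by auto
  define zz where "zz = take p v @ [Pi [v ! p, iv e]] @ map ?cj (drop (Suc p) v)"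
  have zzD: "zz \<in> D" "[v ! p, iv e] \<in> D" using zz_D[OF v p(1)] unfolding zz_def by auto
  have lzz: "length zz = k" unfolding zz_def using p lv by simp
  define y where "y = ainv Phi zz"
  have y: "y \<in> D" "length y = k" "y = map (pl (ainv Phi)) zz"
    using ainv_props[OF Phi zzD(1)] aut_map[OF ainvPhi zzD(1)] lzz unfolding y_def by auto
  have yk: "y \<in> Dk G k" using y by (simp add: Dk_def)
  have zM: "\<And>j. j < k \<Longrightarrow> zz ! j \<in> M" using in_D_M[OF zzD(1)] lzz by auto
  have "F (replicate z 0 @ replicate (Suc k - z) 1) y = map (hlet z y) [0..<k]" using F_rep z yk by simp
  also have "\<dots> = v"
  proof (rule nth_equalityI)
    show "length (map (hlet z y) [0..<k]) = length v" using lv by simp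
  next
    fix j assume "j < length (map (hlet z y) [0..<k])" hence j: "j < k" by simp
    have yj: "pl Phi (y ! j) = zz ! j" using y lzz j ainv_pl(1)[OF Phi zM[OF j]] by simp
    have "map (hlet z y) [0..<k] ! j = hlet z y j" using j by simp
    also have "\<dots> = v ! j"
    proof (cases "j < p")
      case True
      hence "zz ! j = v ! j" unfolding zz_def using lv p by (simp add: nth_append)
      thus ?thesis using True yj p unfolding hlet_def by simp
    next
      case False note np = this
      show ?thesis
      proof (cases "j = p")
        case True
        hence "zz ! j = Pi [v ! p, iv e]" unfolding zz_def using lv p by (simp add: nth_append)
        hence "hlet z y j = Pi [Pi [v ! p, iv e], e]" using True yj p unfolding hlet_def by simp
        also have "\<dots> = v ! p" using cancel_r[OF zzD(2)] e_M by simp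
        finally show ?thesis using True by simp
      next
        case False
        hence jp: "p < j" using np by simp
        hence "zz ! j = ?cj (v ! j)" unfolding zz_def using lv p j by (simp add: nth_append)
        hence zj: "zz ! j = pl Phi (pl (ainv Psi) (v ! j))" using I1[OF vM[OF j]] by simp
        have tM: "pl (ainv Psi) (v ! j) \<in> M" using aut_pl[OF ainvPsi vM[OF j]] by blast
        have "y ! j = pl (ainv Psi) (v ! j)" using y lzz j zj ainv_pl(2)[OF Phi tM] by simp
        hence "pl Psi (y ! j) = v ! j" using ainv_pl(1)[OF Psi vM[OF j]] by simp
        thus ?thesis using jp p unfolding hlet_def by simp
      qed
    qed
    finally show "map (hlet z y) [0..<k] ! j = v ! j" .
  qed
  finally show ?thesis using yk by blast
qed

lemma F_bij: assumes c: "c \<in> dsimp 1 k" shows "bij_betw (F c) (Dk G k) (Dk G k)"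
proof -
  obtain z where z: "z \<le> Suc k" "c = replicate z 0 @ replicate (Suc k - z) 1" using dsimp1_char[OF c] by blast
  show ?thesis
  proof (cases "z = 0")
    case True
    hence "\<And>y. y \<in> Dk G k \<Longrightarrow> F c y = Psi y" using F1 z by simp
    thus ?thesis using AutSet_bij[OF Psi] bij_betw_cong by metis
  next
    case False note z0 = this
    show ?thesis
    proof (cases "z = Suc k")
      case True
      hence "\<And>y. y \<in> Dk G k \<Longrightarrow> F c y = Phi y" using F0 z by simp
      thus ?thesis using AutSet_bij[OF Phi] bij_betw_cong by metis
    next
      case False
      hence zk: "0 < z" "z \<le> k" using z z0 by auto
      have "F c ` Dk G k = Dk G k"
      proof
        show "F c ` Dk G k \<subseteq> Dk G k" using smap_Dk[OF Fs c] by blast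
        show "Dk G k \<subseteq> F c ` Dk G k" using F_surj[OF zk] z by blast
      qed
      thus ?thesis using F_inj[OF z(1)] z unfolding bij_betw_def by simp
    qed
  qed
qed

end


lemma sorted_hd_le: "sorted a \<Longrightarrow> x \<in> set a \<Longrightarrow> hd a \<le> x"
  by (cases a) auto
lemma sorted_le_last: "sorted a \<Longrightarrow> x \<in> set a \<Longrightarrow> x \<le> last a"
  by (induct a) (auto simp: last_ConsR)

locale nerve_el = pgrp +
  fixes n Ps es
  assumes X: "(Ps, es) \<in> sg_car (nerve_Aut G) n"
begin

lemma lenPs: "length Ps = Suc n" using X unfolding nerve_Aut_def by simp
lemma lenes: "length es = n" using X unfolding nerve_Aut_def by simp
lemma PsA: "j \<le> n \<Longrightarrow> Ps ! j \<in> AutSet G"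
  using X lenPs unfolding nerve_Aut_def by (auto simp: subset_iff)
lemma esH: "i < n \<Longrightarrow> es ! i \<in> aut_hom G (Ps ! Suc i) (Ps ! i)"
  using X unfolding nerve_Aut_def by simp

definition Hh :: "nat \<Rightarrow> nat list \<Rightarrow> 'a list \<Rightarrow> 'a list" where
  "Hh m = (SOME F. homot (Ps ! m) (Ps ! Suc m) (es ! m) F)"

lemma Hh_hom: assumes m: "m < n" shows "hom G (Ps ! m) (Ps ! Suc m) (es ! m) (Hh m)"
proof -
  have "\<exists>F. homot (Ps ! m) (Ps ! Suc m) (es ! m) F" using esH[OF m] aut_hom_iff by auto
  hence "homot (Ps ! m) (Ps ! Suc m) (es ! m) (Hh m)" unfolding Hh_def by (rule someI_ex)
  thus ?thesis unfolding hom_def hom_axioms_def using pgrp_axioms PsA m by simp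
qed

definition th :: "nat \<Rightarrow> nat \<Rightarrow> nat" where "th m x = (if x \<le> m then 0 else 1)"

function Fr :: "nat list \<Rightarrow> 'a list \<Rightarrow> 'a list" where
  "Fr a w = (if a \<noteq> [] \<and> hd a < last a
     then Hh (hd a) (map (th (hd a)) a) (ainv (Ps ! Suc (hd a)) (Fr (map (max (Suc (hd a))) a) w))
     else (Ps ! hd a) w)"
  by pat_completeness auto
termination
proof (relation "measure (\<lambda>(a, w). last a - hd a)")
  fix a :: "nat list" and w :: "'a list"
  assume h: "a \<noteq> [] \<and> hd a < last a"
  thus "((map (max (Suc (hd a))) a, w), a, w) \<in> measure (\<lambda>(a, w). last a - hd a)"
    by (simp add: hd_map last_map diff_less_mono2)
qed auto

declare Fr.simps[simp del]

lemma dsimp_max: assumes a: "a \<in> dsimp n k" and m: "m < n" shows "map (max (Suc m)) a \<in> dsimp n k"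
proof -
  have "sorted (map (max (Suc m)) a)" using a by (intro sorted_map_mono) (auto simp: dsimp_def mono_on_def)
  thus ?thesis using a m unfolding dsimp_def by auto
qed

lemma dsimp_th: assumes a: "a \<in> dsimp n k" shows "map (th m) a \<in> dsimp 1 k"
proof -
  have "sorted (map (th m) a)" using a by (intro sorted_map_mono) (auto simp: dsimp_def mono_on_def th_def)
  thus ?thesis using a unfolding dsimp_def th_def by auto
qed

lemma Fr_const: "a \<noteq> [] \<Longrightarrow> \<not> hd a < last a \<Longrightarrow> Fr a w = (Ps ! hd a) w"
  by (simp add: Fr.simps)
lemma Fr_step: "a \<noteq> [] \<Longrightarrow> hd a < last a \<Longrightarrow>
   Fr a w = Hh (hd a) (map (th (hd a)) a) (ainv (Ps ! Suc (hd a)) (Fr (map (max (Suc (hd a))) a) w))"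
  by (simp add: Fr.simps)

lemma dsimp_ne: "a \<in> dsimp n k \<Longrightarrow> a \<noteq> []" unfolding dsimp_def by auto
lemma dsimp_hd_le: "a \<in> dsimp n k \<Longrightarrow> hd a \<le> n" using dsimp_ne[of a k] unfolding dsimp_def by auto
lemma dsimp_last_le: "a \<in> dsimp n k \<Longrightarrow> last a \<le> n" unfolding dsimp_def using dsimp_ne[of a k] by (auto simp: dsimp_def)

lemma Fr_D: "a \<in> dsimp n k \<Longrightarrow> w \<in> Dk G k \<Longrightarrow> Fr a w \<in> Dk G k"
proof (induct a w arbitrary: k rule: Fr.induct)
  case (1 a w)
  have ne: "a \<noteq> []" using dsimp_ne 1(2) .
  show ?case
  proof (cases "hd a < last a")
    case True
    let ?m = "hd a"
    have m: "?m < n" using True dsimp_last_le[OF 1(2)] by simp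
    interpret H: hom G "Ps ! ?m" "Ps ! Suc ?m" "es ! ?m" "Hh ?m" using Hh_hom[OF m] .
    have r: "Fr (map (max (Suc ?m)) a) w \<in> Dk G k" using 1(1)[OF conjI[OF ne True] dsimp_max[OF 1(2) m] 1(3)] .
    have q: "ainv (Ps ! Suc ?m) (Fr (map (max (Suc ?m)) a) w) \<in> Dk G k"
      using AutSet_D[OF ainv_AutSet[OF PsA] r] m by simp
    show ?thesis using Fr_step[OF ne True] smap_Dk[OF H.Fs dsimp_th[OF 1(2)] q] by simp
  next
    case False
    thus ?thesis using Fr_const[OF ne False] AutSet_D[OF PsA[OF dsimp_hd_le[OF 1(2)]] 1(3)] by simp
  qed
qed

lemma th_all1: "\<forall>x\<in>set a. m < x \<Longrightarrow> map (th m) a = replicate (length a) 1"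
  by (induct a) (auto simp: th_def)
lemma th_all0: "\<forall>x\<in>set a. x \<le> m \<Longrightarrow> map (th m) a = replicate (length a) 0"
  by (induct a) (auto simp: th_def)
lemma max_id: "\<forall>x\<in>set a. m \<le> x \<Longrightarrow> map (max m) a = a"
  by (induct a) (auto simp: max_def)

lemma sorted_const: "sorted a \<Longrightarrow> a \<noteq> [] \<Longrightarrow> \<not> hd a < last a \<Longrightarrow> a = replicate (length a) (hd a)"
proof -
  assume s: "sorted a" "a \<noteq> []" "\<not> hd a < last a"
  have "\<forall>x\<in>set a. x = hd a"
  proof
    fix x assume x: "x \<in> set a"
    have "hd a \<le> x" "x \<le> last a" using sorted_hd_le[OF s(1) x] sorted_le_last[OF s(1) x] by auto
    thus "x = hd a" using s(3) by simp
  qed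
  thus ?thesis by (simp add: replicate_eqI)
qed

lemma FACT: assumes a: "a \<in> dsimp n k" and w: "w \<in> Dk G k" and m: "m < n" and am: "\<forall>x\<in>set a. m \<le> x"
  shows "Fr a w = Hh m (map (th m) a) (ainv (Ps ! Suc m) (Fr (map (max (Suc m)) a) w))"
proof -
  interpret H: hom G "Ps ! m" "Ps ! Suc m" "es ! m" "Hh m" using Hh_hom[OF m] .
  have ne: "a \<noteq> []" using dsimp_ne a .
  have la: "length a = Suc k" using dsimp_len a .
  have s: "sorted a" using dsimp_sorted a .
  have hm: "m \<le> hd a" using am ne by simp
  have PA: "Ps ! Suc m \<in> AutSet G" using PsA m by simp
  show ?thesis
  proof (cases "m < hd a")
    case True
    have all: "\<forall>x\<in>set a. m < x" using True sorted_hd_le[OF s] by (meson order_less_le_trans)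
    have e1: "map (th m) a = replicate (Suc k) 1" using th_all1[OF all] la by simp
    have e2: "map (max (Suc m)) a = a" using all by (intro max_id) (simp add: Suc_le_eq)
    have r: "Fr a w \<in> Dk G k" using Fr_D[OF a w] .
    have q: "ainv (Ps ! Suc m) (Fr a w) \<in> Dk G k" using AutSet_D[OF ainv_AutSet[OF PA] r] .
    show ?thesis unfolding e1 e2 H.F1[OF q] using ainv_props[OF PA] r by (simp add: Dk_def)
  next
    case False
    hence hd: "hd a = m" using hm by simp
    show ?thesis
    proof (cases "hd a < last a")
      case True thus ?thesis using Fr_step[OF ne True] hd by simp
    next
      case False
      have ac: "a = replicate (Suc k) m" using sorted_const[OF s ne False] hd la by simp
      have e1: "map (th m) a = replicate (Suc k) 0" using ac by (simp add: th_def)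
      have e2: "map (max (Suc m)) a = replicate (Suc k) (Suc m)" using ac by simp
      have c2: "Fr (replicate (Suc k) (Suc m)) w = (Ps ! Suc m) w" using Fr_const[of "replicate (Suc k) (Suc m)"] by simp
      have wD: "w \<in> D" using w by (simp add: Dk_def)
      have r: "(Ps ! Suc m) w \<in> Dk G k" using AutSet_D[OF PA w] .
      have q: "ainv (Ps ! Suc m) ((Ps ! Suc m) w) = w" using ainv_props[OF PA wD] by simp
      show ?thesis unfolding e1 e2 c2 q H.F0[OF w] using Fr_const[OF ne False] hd by simp
    qed
  qed
qed


lemma set_ldel: "set (ldel i a) \<subseteq> set a" unfolding ldel_def using set_take_subset set_drop_subset by fastforce
lemma set_ldup: "set (ldup i a) \<subseteq> set a" unfolding ldup_def using set_take_subset set_drop_subset by fastforce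
lemma ldel_rep: "i < Suc k \<Longrightarrow> ldel i (replicate (Suc k) x) = replicate k x"
proof -
  assume i: "i < Suc k"
  have "ldel i (replicate (Suc k) x) = replicate i x @ replicate (k - i) x"
    unfolding ldel_def using i by (simp add: take_replicate drop_replicate min_def del: replicate_Suc)
  also have "\<dots> = replicate k x" using i by (simp add: replicate_add[symmetric] del: replicate_Suc)
  finally show ?thesis .
qed
lemma ldup_rep: "i < Suc k \<Longrightarrow> ldup i (replicate (Suc k) x) = replicate (Suc (Suc k)) x"
proof -
  assume i: "i < Suc k"
  have "ldup i (replicate (Suc k) x) = replicate (Suc i) x @ replicate (Suc k - i) x"
    unfolding ldup_def using i by (simp add: take_replicate drop_replicate min_def del: replicate_Suc)
  also have "\<dots> = replicate (Suc (Suc k)) x" using i by (simp add: replicate_add[symmetric] del: replicate_Suc)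
  finally show ?thesis .
qed

lemma Fr_face: "a \<in> dsimp n (Suc k) \<Longrightarrow> w \<in> Dk G (Suc k) \<Longrightarrow> i \<le> Suc k \<Longrightarrow>
   Fr (ldel i a) (wface G (Suc k) i w) = wface G (Suc k) i (Fr a w)"
proof (induct a w arbitrary: k i rule: Fr.induct)
  case (1 a w)
  have ne: "a \<noteq> []" using dsimp_ne 1(2) .
  have s: "sorted a" using dsimp_sorted 1(2) .
  have a1: "ldel i a \<in> dsimp n k" using dsimp_ldel[OF 1(2) 1(4)] .
  have w1: "wface G (Suc k) i w \<in> Dk G k" using wface_D[OF 1(3) 1(4)] by blast
  show ?case
  proof (cases "hd a < last a")
    case True
    let ?m = "hd a"
    have m: "?m < n" using True dsimp_last_le[OF 1(2)] by simp
    interpret H: hom G "Ps ! ?m" "Ps ! Suc ?m" "es ! ?m" "Hh ?m" using Hh_hom[OF m] .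
    let ?P = "Ps ! Suc ?m"
    have P: "ainv ?P \<in> AutSet G" using ainv_AutSet[OF PsA] m by simp
    let ?a' = "map (max (Suc ?m)) a" and ?c = "map (th ?m) a"
    have a': "?a' \<in> dsimp n (Suc k)" using dsimp_max[OF 1(2) m] .
    have c: "?c \<in> dsimp 1 (Suc k)" using dsimp_th[OF 1(2)] .
    have v: "Fr ?a' w \<in> Dk G (Suc k)" using Fr_D[OF a' 1(3)] .
    have IH: "Fr (ldel i ?a') (wface G (Suc k) i w) = wface G (Suc k) i (Fr ?a' w)"
      using 1(1)[OF conjI[OF ne True] a' 1(3) 1(4)] .
    have am: "\<forall>x\<in>set (ldel i a). ?m \<le> x"
    proof
      fix x assume "x \<in> set (ldel i a)" hence "x \<in> set a" using set_ldel[of i a] by (rule subsetD[rotated])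
      thus "?m \<le> x" by (rule sorted_hd_le[OF s])
    qed
    have "Fr (ldel i a) (wface G (Suc k) i w) = Hh ?m (map (th ?m) (ldel i a)) (ainv ?P (Fr (map (max (Suc ?m)) (ldel i a)) (wface G (Suc k) i w)))"
      using FACT[OF a1 w1 m am] .
    also have "\<dots> = Hh ?m (ldel i ?c) (ainv ?P (Fr (ldel i ?a') (wface G (Suc k) i w)))" by (simp add: ldel_map)
    also have "\<dots> = Hh ?m (ldel i ?c) (ainv ?P (wface G (Suc k) i (Fr ?a' w)))" using IH by simp
    also have "\<dots> = Hh ?m (ldel i ?c) (wface G (Suc k) i (ainv ?P (Fr ?a' w)))" using AutSet_face[OF P v 1(4)] by simp
    also have "\<dots> = wface G (Suc k) i (Hh ?m ?c (ainv ?P (Fr ?a' w)))"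
      using smap_face[OF H.Fs c AutSet_D[OF P v] 1(4)] .
    also have "\<dots> = wface G (Suc k) i (Fr a w)" using Fr_step[OF ne True] by simp
    finally show ?thesis .
  next
    case False
    let ?h = "hd a"
    have ac: "a = replicate (Suc (Suc k)) ?h" using sorted_const[OF s ne False] dsimp_len[OF 1(2)] by simp
    have ld: "ldel i a = replicate (Suc k) ?h" using ac ldel_rep[of i "Suc k" ?h] 1(4) by simp
    have c1: "Fr (ldel i a) (wface G (Suc k) i w) = (Ps ! ?h) (wface G (Suc k) i w)"
      using Fr_const[of "ldel i a"] ld by simp
    have c2: "Fr a w = (Ps ! ?h) w" using Fr_const[OF ne False] .
    show ?thesis using c1 c2 AutSet_face[OF PsA[OF dsimp_hd_le[OF 1(2)]] 1(3) 1(4)] by simp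
  qed
qed

lemma Fr_deg: "a \<in> dsimp n k \<Longrightarrow> w \<in> Dk G k \<Longrightarrow> i \<le> k \<Longrightarrow>
   Fr (ldup i a) (wdeg G i w) = wdeg G i (Fr a w)"
proof (induct a w arbitrary: k i rule: Fr.induct)
  case (1 a w)
  have ne: "a \<noteq> []" using dsimp_ne 1(2) .
  have s: "sorted a" using dsimp_sorted 1(2) .
  have a1: "ldup i a \<in> dsimp n (Suc k)" using dsimp_ldup[OF 1(2) 1(4)] .
  have w1: "wdeg G i w \<in> Dk G (Suc k)" using wdeg_D[OF 1(3) 1(4)] by blast
  show ?case
  proof (cases "hd a < last a")
    case True
    let ?m = "hd a"
    have m: "?m < n" using True dsimp_last_le[OF 1(2)] by simp
    interpret H: hom G "Ps ! ?m" "Ps ! Suc ?m" "es ! ?m" "Hh ?m" using Hh_hom[OF m] .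
    let ?P = "Ps ! Suc ?m"
    have P: "ainv ?P \<in> AutSet G" using ainv_AutSet[OF PsA] m by simp
    let ?a' = "map (max (Suc ?m)) a" and ?c = "map (th ?m) a"
    have a': "?a' \<in> dsimp n k" using dsimp_max[OF 1(2) m] .
    have c: "?c \<in> dsimp 1 k" using dsimp_th[OF 1(2)] .
    have v: "Fr ?a' w \<in> Dk G k" using Fr_D[OF a' 1(3)] .
    have IH: "Fr (ldup i ?a') (wdeg G i w) = wdeg G i (Fr ?a' w)"
      using 1(1)[OF conjI[OF ne True] a' 1(3) 1(4)] .
    have am: "\<forall>x\<in>set (ldup i a). ?m \<le> x"
    proof
      fix x assume "x \<in> set (ldup i a)" hence "x \<in> set a" using set_ldup[of i a] by (rule subsetD[rotated])
      thus "?m \<le> x" by (rule sorted_hd_le[OF s])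
    qed
    have "Fr (ldup i a) (wdeg G i w) = Hh ?m (map (th ?m) (ldup i a)) (ainv ?P (Fr (map (max (Suc ?m)) (ldup i a)) (wdeg G i w)))"
      using FACT[OF a1 w1 m am] .
    also have "\<dots> = Hh ?m (ldup i ?c) (ainv ?P (Fr (ldup i ?a') (wdeg G i w)))" by (simp add: ldup_map)
    also have "\<dots> = Hh ?m (ldup i ?c) (ainv ?P (wdeg G i (Fr ?a' w)))" using IH by simp
    also have "\<dots> = Hh ?m (ldup i ?c) (wdeg G i (ainv ?P (Fr ?a' w)))" using AutSet_deg[OF P v 1(4)] by simp
    also have "\<dots> = wdeg G i (Hh ?m ?c (ainv ?P (Fr ?a' w)))"
      using smap_deg[OF H.Fs c AutSet_D[OF P v] 1(4)] .
    also have "\<dots> = wdeg G i (Fr a w)" using Fr_step[OF ne True] by simp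
    finally show ?thesis .
  next
    case False
    let ?h = "hd a"
    have ac: "a = replicate (Suc k) ?h" using sorted_const[OF s ne False] dsimp_len[OF 1(2)] by simp
    have ld: "ldup i a = replicate (Suc (Suc k)) ?h" using ac ldup_rep[of i k ?h] 1(4) by simp
    have c1: "Fr (ldup i a) (wdeg G i w) = (Ps ! ?h) (wdeg G i w)"
      using Fr_const[of "ldup i a"] ld by simp
    have c2: "Fr a w = (Ps ! ?h) w" using Fr_const[OF ne False] .
    show ?thesis using c1 c2 AutSet_deg[OF PsA[OF dsimp_hd_le[OF 1(2)]] 1(3) 1(4)] by simp
  qed
qed

lemma Fr_bij: "a \<in> dsimp n k \<Longrightarrow> bij_betw (Fr a) (Dk G k) (Dk G k)"
proof (induct "last a - hd a" arbitrary: a rule: less_induct)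
  case less
  have ne: "a \<noteq> []" using dsimp_ne less(2) .
  show ?case
  proof (cases "hd a < last a")
    case True
    let ?m = "hd a"
    have m: "?m < n" using True dsimp_last_le[OF less(2)] by simp
    interpret H: hom G "Ps ! ?m" "Ps ! Suc ?m" "es ! ?m" "Hh ?m" using Hh_hom[OF m] .
    let ?P = "Ps ! Suc ?m"
    have P: "ainv ?P \<in> AutSet G" using ainv_AutSet[OF PsA] m by simp
    let ?a' = "map (max (Suc ?m)) a" and ?c = "map (th ?m) a"
    have a': "?a' \<in> dsimp n k" using dsimp_max[OF less(2) m] .
    have c: "?c \<in> dsimp 1 k" using dsimp_th[OF less(2)] .
    have d: "last ?a' - hd ?a' < last a - hd a" using ne True by (simp add: hd_map last_map diff_less_mono2)
    have b1: "bij_betw (Fr ?a') (Dk G k) (Dk G k)" using less(1)[OF d a'] .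
    have b2: "bij_betw (ainv ?P) (Dk G k) (Dk G k)" using AutSet_bij[OF P] .
    have b3: "bij_betw (Hh ?m ?c) (Dk G k) (Dk G k)" using H.F_bij[OF c] .
    have "bij_betw (Hh ?m ?c \<circ> ainv ?P \<circ> Fr ?a') (Dk G k) (Dk G k)"
      using bij_betw_trans[OF bij_betw_trans[OF b1 b2] b3] by (simp add: comp_assoc)
    moreover have "\<And>v. v \<in> Dk G k \<Longrightarrow> (Hh ?m ?c \<circ> ainv ?P \<circ> Fr ?a') v = Fr a v"
      using Fr_step[OF ne True] by simp
    ultimately show ?thesis by (rule bij_betw_cong[THEN iffD1, rotated])
  next
    case False
    have "bij_betw (Ps ! hd a) (Dk G k) (Dk G k)" using AutSet_bij[OF PsA[OF dsimp_hd_le[OF less(2)]]] .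
    moreover have "\<And>v. v \<in> Dk G k \<Longrightarrow> (Ps ! hd a) v = Fr a v" using Fr_const[OF ne False] by simp
    ultimately show ?thesis by (rule bij_betw_cong[THEN iffD1, rotated])
  qed
qed

end


context pgrp begin
lemma sing_Dk1: "[one] \<in> Dk G (Suc 0)" using sing_D[OF one_M] by (simp add: Dk_def)
lemma d01': "[0, 1] \<in> dsimp 1 (Suc 0)" unfolding dsimp_def by simp
end

context nerve_el begin

definition Fn :: "nat list \<Rightarrow> 'a list \<Rightarrow> 'a list" where
  "Fn = (\<lambda>a w. if prod_valid G n a w then Fr a w else undefined)"

lemma valid_I: "a \<in> dsimp n k \<Longrightarrow> w \<in> Dk G k \<Longrightarrow> prod_valid G n a w" unfolding prod_valid_def by blast

lemma Fn_aut: "aut_elem G n Fn"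
  unfolding aut_elem_def prod_smap_def
proof (intro conjI allI impI)
  fix k a w assume h: "a \<in> dsimp n k \<and> w \<in> Dk G k"
  have "prod_valid G n a w" using valid_I h by blast
  thus "Fn a w \<in> Dk G k" unfolding Fn_def using Fr_D h by simp
next
  fix a w assume "\<not> prod_valid G n a w" thus "Fn a w = undefined" unfolding Fn_def by simp
next
  fix k a w i assume h: "a \<in> dsimp n (Suc k) \<and> w \<in> Dk G (Suc k) \<and> i \<le> Suc k"
  have v1: "prod_valid G n (ldel i a) (wface G (Suc k) i w)" using valid_I dsimp_ldel wface_D h by blast
  have v2: "prod_valid G n a w" using valid_I h by blast
  show "Fn (ldel i a) (wface G (Suc k) i w) = wface G (Suc k) i (Fn a w)"
    unfolding Fn_def using v1 v2 Fr_face[of a k w i] h by simp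
next
  fix k a w i assume h: "a \<in> dsimp n k \<and> w \<in> Dk G k \<and> i \<le> k"
  have v1: "prod_valid G n (ldup i a) (wdeg G i w)" using valid_I dsimp_ldup wdeg_D h by blast
  have v2: "prod_valid G n a w" using valid_I h by blast
  show "Fn (ldup i a) (wdeg G i w) = wdeg G i (Fn a w)"
    unfolding Fn_def using v1 v2 Fr_deg[of a k w i] h by simp
next
  fix k a assume a: "a \<in> dsimp n k"
  have "bij_betw (Fr a) (Dk G k) (Dk G k)" using Fr_bij[OF a] .
  moreover have "\<And>w. w \<in> Dk G k \<Longrightarrow> Fr a w = Fn a w" unfolding Fn_def using valid_I[OF a] by simp
  ultimately show "bij_betw (Fn a) (Dk G k) (Dk G k)" by (rule bij_betw_cong[THEN iffD1, rotated])
qed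

lemma rep_dsimp: "j \<le> n \<Longrightarrow> replicate (Suc k) j \<in> dsimp n k"
  unfolding dsimp_def by (auto simp: sorted_replicate)

lemma Fn_vert: assumes j: "j \<le> n" and w: "w \<in> D" shows "Fn (replicate (Suc (length w)) j) w = (Ps ! j) w"
proof -
  have "prod_valid G n (replicate (Suc (length w)) j) w" using valid_I[OF rep_dsimp[OF j]] w by (simp add: Dk_def)
  thus ?thesis unfolding Fn_def using Fr_const[of "replicate (Suc (length w)) j" w] by simp
qed

lemma Fn_edge: assumes i: "i < n" shows "Fn [i, Suc i] [one] = [es ! i]"
proof -
  interpret H: hom G "Ps ! i" "Ps ! Suc i" "es ! i" "Hh i" using Hh_hom[OF i] .
  have d: "[i, Suc i] \<in> dsimp n (Suc 0)" using i unfolding dsimp_def by simp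
  have v: "prod_valid G n [i, Suc i] [one]" using valid_I[OF d] sing_Dk1 by simp
  have P: "Ps ! Suc i \<in> AutSet G" using PsA i by simp
  have c: "Fr [Suc i, Suc i] [one] = [one]" using Fr_const[of "[Suc i, Suc i]" "[one]"] aut_one[OF P] by simp
  have q: "ainv (Ps ! Suc i) [one] = [one]" using inv_on_eq[OF P] aut_one[OF P] sing_D[OF one_M] by simp
  have "Fr [i, Suc i] [one] = Hh i (map (th i) [i, Suc i]) (ainv (Ps ! Suc i) (Fr (map (max (Suc i)) [i, Suc i]) [one]))"
    using Fr_step[of "[i, Suc i]" "[one]"] by simp
  also have "\<dots> = Hh i [0, 1] [one]" using c q by (simp add: th_def)
  also have "\<dots> = [es ! i]" using H.Fe .
  finally show ?thesis unfolding Fn_def using v by simp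
qed

end

lemma ldel_rep': "i < Suc k \<Longrightarrow> ldel i (replicate (Suc k) x) = replicate k x"
proof -
  assume i: "i < Suc k"
  have "ldel i (replicate (Suc k) x) = replicate i x @ replicate (k - i) x"
    unfolding ldel_def using i by (simp add: take_replicate drop_replicate min_def del: replicate_Suc)
  also have "\<dots> = replicate k x" using i by (simp add: replicate_add[symmetric] del: replicate_Suc)
  finally show ?thesis .
qed
lemma ldup_rep': "i < Suc k \<Longrightarrow> ldup i (replicate (Suc k) x) = replicate (Suc (Suc k)) x"
proof -
  assume i: "i < Suc k"
  have "ldup i (replicate (Suc k) x) = replicate (Suc i) x @ replicate (Suc k - i) x"
    unfolding ldup_def using i by (simp add: take_replicate drop_replicate min_def del: replicate_Suc)
  also have "\<dots> = replicate (Suc (Suc k)) x" using i by (simp add: replicate_add[symmetric] del: replicate_Suc)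
  finally show ?thesis .
qed

context pgrp begin

definition vert :: "(nat list \<Rightarrow> 'a list \<Rightarrow> 'a list) \<Rightarrow> nat \<Rightarrow> 'a list \<Rightarrow> 'a list" where
  "vert F j = (\<lambda>w. if w \<in> D then F (replicate (Suc (length w)) j) w else undefined)"

definition gmap :: "nat \<Rightarrow> (nat list \<Rightarrow> 'a list \<Rightarrow> 'a list) \<Rightarrow> ('a list \<Rightarrow> 'a list) list \<times> 'a list" where
  "gmap n F = (map (vert F) [0..<Suc n], map (\<lambda>i. hd (F [i, Suc i] [one])) [0..<n])"

lemma aut_smap: "aut_elem G n F \<Longrightarrow> prod_smap G n F" unfolding aut_elem_def by blast
lemma aut_bij: "aut_elem G n F \<Longrightarrow> a \<in> dsimp n k \<Longrightarrow> bij_betw (F a) (Dk G k) (Dk G k)" unfolding aut_elem_def by blast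

lemma rep_dsimp': "j \<le> n \<Longrightarrow> replicate (Suc k) j \<in> dsimp n k"
  unfolding dsimp_def by (auto simp: sorted_replicate)

lemma vert_eq: "w \<in> Dk G k \<Longrightarrow> vert F j w = F (replicate (Suc k) j) w" unfolding vert_def by (simp add: Dk_def)

lemma vert_Aut: assumes F: "aut_elem G n F" and j: "j \<le> n" shows "vert F j \<in> AutSet G"
  unfolding AutSet_def
proof (intro CollectI conjI allI impI)
  fix w assume "w \<notin> D" thus "vert F j w = undefined" unfolding vert_def by simp
next
  fix k
  have "bij_betw (F (replicate (Suc k) j)) (Dk G k) (Dk G k)" using aut_bij[OF F rep_dsimp'[OF j]] .
  moreover have "\<And>w. w \<in> Dk G k \<Longrightarrow> F (replicate (Suc k) j) w = vert F j w" using vert_eq by metis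
  ultimately show "bij_betw (vert F j) (Dk G k) (Dk G k)" by (rule bij_betw_cong[THEN iffD1, rotated])
next
  have Fs: "prod_smap G n F" using aut_smap[OF F] .
  fix k w i assume h: "w \<in> Dk G (Suc k) \<and> i \<le> Suc k"
  have f: "wface G (Suc k) i w \<in> Dk G k" using wface_D h by blast
  have "F (ldel i (replicate (Suc (Suc k)) j)) (wface G (Suc k) i w) = wface G (Suc k) i (F (replicate (Suc (Suc k)) j) w)"
    using smap_face[OF Fs rep_dsimp'[OF j]] h by blast
  moreover have "ldel i (replicate (Suc (Suc k)) j) = replicate (Suc k) j" using ldel_rep'[of i "Suc k" j] h by (simp del: replicate_Suc)
  ultimately show "vert F j (wface G (Suc k) i w) = wface G (Suc k) i (vert F j w)"
    using vert_eq[OF f] vert_eq[of w "Suc k"] h by simp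
next
  have Fs: "prod_smap G n F" using aut_smap[OF F] .
  fix k w i assume h: "w \<in> Dk G k \<and> i \<le> k"
  have f: "wdeg G i w \<in> Dk G (Suc k)" using wdeg_D h by blast
  have "F (ldup i (replicate (Suc k) j)) (wdeg G i w) = wdeg G i (F (replicate (Suc k) j) w)"
    using smap_deg[OF Fs rep_dsimp'[OF j]] h by blast
  moreover have "ldup i (replicate (Suc k) j) = replicate (Suc (Suc k)) j" using ldup_rep'[of i k j] h by (simp del: replicate_Suc)
  ultimately show "vert F j (wdeg G i w) = wdeg G i (vert F j w)"
    using vert_eq[OF f] vert_eq[of w k] h by simp
qed

definition restr :: "(nat list \<Rightarrow> 'a list \<Rightarrow> 'a list) \<Rightarrow> nat \<Rightarrow> nat list \<Rightarrow> 'a list \<Rightarrow> 'a list" where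
  "restr F i = (\<lambda>b w. if prod_valid G 1 b w then F (map (\<lambda>x. x + i) b) w else undefined)"

lemma dsimp_shift: assumes b: "b \<in> dsimp 1 k" and i: "i < n" shows "map (\<lambda>x. x + i) b \<in> dsimp n k"
proof -
  have "sorted (map (\<lambda>x. x + i) b)" using b by (intro sorted_map_mono) (auto simp: dsimp_def mono_on_def)
  thus ?thesis using b i unfolding dsimp_def by auto
qed

lemma restr_smap: assumes F: "prod_smap G n F" and i: "i < n" shows "prod_smap G 1 (restr F i)"
  unfolding prod_smap_def
proof (intro conjI allI impI)
  have v: "\<And>a w k. a \<in> dsimp 1 k \<Longrightarrow> w \<in> Dk G k \<Longrightarrow> prod_valid G 1 a w" unfolding prod_valid_def by blast
  fix k a w assume h: "a \<in> dsimp 1 k \<and> w \<in> Dk G k"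
  have "prod_valid G 1 a w" using v h by blast
  thus "restr F i a w \<in> Dk G k" unfolding restr_def using smap_Dk[OF F dsimp_shift[OF _ i]] h by simp
next
  fix a w assume "\<not> prod_valid G 1 a w" thus "restr F i a w = undefined" unfolding restr_def by simp
next
  have v: "\<And>a w k. a \<in> dsimp 1 k \<Longrightarrow> w \<in> Dk G k \<Longrightarrow> prod_valid G 1 a w" unfolding prod_valid_def by blast
  fix k a w j assume h: "a \<in> dsimp 1 (Suc k) \<and> w \<in> Dk G (Suc k) \<and> j \<le> Suc k"
  have v1: "prod_valid G 1 (ldel j a) (wface G (Suc k) j w)" using v dsimp_ldel wface_D h by blast
  have v2: "prod_valid G 1 a w" using v h by blast
  show "restr F i (ldel j a) (wface G (Suc k) j w) = wface G (Suc k) j (restr F i a w)"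
    unfolding restr_def using v1 v2 smap_face[OF F dsimp_shift[OF _ i], of a k w j] h by (simp add: ldel_map)
next
  have v: "\<And>a w k. a \<in> dsimp 1 k \<Longrightarrow> w \<in> Dk G k \<Longrightarrow> prod_valid G 1 a w" unfolding prod_valid_def by blast
  fix k a w j assume h: "a \<in> dsimp 1 k \<and> w \<in> Dk G k \<and> j \<le> k"
  have v1: "prod_valid G 1 (ldup j a) (wdeg G j w)" using v dsimp_ldup wdeg_D h by blast
  have v2: "prod_valid G 1 a w" using v h by blast
  show "restr F i (ldup j a) (wdeg G j w) = wdeg G j (restr F i a w)"
    unfolding restr_def using v1 v2 smap_deg[OF F dsimp_shift[OF _ i], of a k w j] h by (simp add: ldup_map)
qed

lemma edge_sing: assumes F: "prod_smap G n F" and i: "i < n" shows "F [i, Suc i] [one] = [hd (F [i, Suc i] [one])]"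
proof -
  have "[i, Suc i] \<in> dsimp n (Suc 0)" using i unfolding dsimp_def by simp
  hence "F [i, Suc i] [one] \<in> Dk G (Suc 0)" using smap_Dk[OF F _ sing_Dk1] by blast
  thus ?thesis using Dk1 by auto
qed

lemma restr_hom: assumes F: "aut_elem G n F" and i: "i < n"
  shows "hom G (vert F i) (vert F (Suc i)) (hd (F [i, Suc i] [one])) (restr F i)"
proof -
  have Fs: "prod_smap G n F" using aut_smap[OF F] .
  have v: "\<And>a w k. a \<in> dsimp 1 k \<Longrightarrow> w \<in> Dk G k \<Longrightarrow> prod_valid G 1 a w" unfolding prod_valid_def by blast
  have h: "homot (vert F i) (vert F (Suc i)) (hd (F [i, Suc i] [one])) (restr F i)"
    unfolding homot_def
  proof (intro conjI allI impI)
    show "prod_smap G 1 (restr F i)" using restr_smap[OF Fs i] .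
  next
    fix k w assume w: "w \<in> Dk G k"
    have "prod_valid G 1 (replicate (Suc k) 0) w" using v[OF rep_dsimp'[of 0 1] w] by simp
    thus "restr F i (replicate (Suc k) 0) w = vert F i w" unfolding restr_def using vert_eq[OF w] by simp
  next
    fix k w assume w: "w \<in> Dk G k"
    have "prod_valid G 1 (replicate (Suc k) 1) w" using v[OF rep_dsimp'[of 1 1] w] by simp
    thus "restr F i (replicate (Suc k) 1) w = vert F (Suc i) w" unfolding restr_def using vert_eq[OF w] by simp
  next
    have "prod_valid G 1 [0, 1] [one]" using v[OF d01' sing_Dk1] .
    thus "restr F i [0, 1] (wdeg G 0 []) = [hd (F [i, Suc i] [one])]"
      unfolding restr_def wdeg_def using edge_sing[OF Fs i] by simp
  qed
  show ?thesis unfolding hom_def hom_axioms_def using pgrp_axioms vert_Aut[OF F] i h by simp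
qed

lemma g_in: assumes F: "aut_elem G n F" shows "gmap n F \<in> sg_car (nerve_Aut G) n"
proof -
  have "set (map (vert F) [0..<Suc n]) \<subseteq> AutSet G" using vert_Aut[OF F] by auto
  moreover have "\<forall>i<n. hd (F [i, Suc i] [one]) \<in> aut_hom G (vert F (Suc i)) (vert F i)"
  proof (intro allI impI)
    fix i assume i: "i < n"
    interpret H: hom G "vert F i" "vert F (Suc i)" "hd (F [i, Suc i] [one])" "restr F i" using restr_hom[OF F i] .
    show "hd (F [i, Suc i] [one]) \<in> aut_hom G (vert F (Suc i)) (vert F i)"
      unfolding aut_hom_iff using H.e_norm H.H by blast
  qed
  ultimately show ?thesis unfolding gmap_def nerve_Aut_def by (simp del: upt_Suc)
qed

end


context pgrp begin

lemma rep1_D: "x \<in> M \<Longrightarrow> x # replicate m one \<in> D \<and> Pi (x # replicate m one) = x"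
proof (induct m)
  case 0 thus ?case using sing_D by simp
next
  case (Suc m)
  have "(x # replicate m one) @ [one] @ [] \<in> D \<and> Pi ((x # replicate m one) @ [one] @ []) = Pi ((x # replicate m one) @ [])"
    using ins1[of "x # replicate m one" "[]"] Suc by simp
  moreover have "x # replicate (Suc m) one = (x # replicate m one) @ [one]" by (simp add: replicate_append_same)
  ultimately show ?case using Suc by simp
qed

lemma edge_det: assumes F: "prod_smap G n F" and pq: "p \<le> q" "q \<le> n" and x: "x \<in> M"
  shows "F [p, q] [x] = [Pi (F (p # [p..<Suc q]) (x # replicate (q - p) one))]"
proof -
  let ?c = "p # [p..<Suc q]" and ?u = "x # replicate (q - p) one"
  have c: "?c \<in> dsimp n (Suc (q - p))" using pq unfolding dsimp_def by (auto simp: sorted_upt simp del: upt_Suc)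
  have u: "?u \<in> Dk G (Suc (q - p))" using rep1_D[OF x] by (simp add: Dk_def)
  have "[Pi (F ?c ?u)] = F [hd ?c, last ?c] [Pi ?u]" using smap_long[OF F c u] .
  thus ?thesis using rep1_D[OF x] pq by simp
qed

lemma UNIQ: assumes F1: "prod_smap G n F1" and F2: "prod_smap G n F2"
  and V: "\<And>r x. r \<le> n \<Longrightarrow> x \<in> M \<Longrightarrow> F1 [r, r] [x] = F2 [r, r] [x]"
  and E: "\<And>r. r < n \<Longrightarrow> F1 [r, Suc r] [one] = F2 [r, Suc r] [one]"
  shows "F1 = F2"
proof -
  have PQ: "\<And>p q x. p \<le> q \<Longrightarrow> q \<le> n \<Longrightarrow> x \<in> M \<Longrightarrow> F1 [p, q] [x] = F2 [p, q] [x]"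
  proof -
    fix p q x assume pq: "p \<le> q" "q \<le> n" and x: "x \<in> M"
    let ?c = "p # [p..<Suc q]" and ?u = "x # replicate (q - p) one"
    have c: "?c \<in> dsimp n (Suc (q - p))" using pq unfolding dsimp_def by (auto simp: sorted_upt simp del: upt_Suc)
    have u: "?u \<in> Dk G (Suc (q - p))" using rep1_D[OF x] by (simp add: Dk_def)
    have "F1 ?c ?u = F2 ?c ?u"
    proof -
      have "F1 ?c ?u = map (\<lambda>j. hd (F1 [?c ! j, ?c ! Suc j] [?u ! j])) [0..<Suc (q - p)]" using smap_lw[OF F1 c u] .
      also have "\<dots> = map (\<lambda>j. hd (F2 [?c ! j, ?c ! Suc j] [?u ! j])) [0..<Suc (q - p)]"
      proof (rule map_cong[OF refl])
        fix j assume "j \<in> set [0..<Suc (q - p)]" hence j: "j < Suc (q - p)" by (simp only: set_upt atLeastLessThan_iff)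
        show "hd (F1 [?c ! j, ?c ! Suc j] [?u ! j]) = hd (F2 [?c ! j, ?c ! Suc j] [?u ! j])"
        proof (cases j)
          case 0 thus ?thesis using V[of p x] pq x by (simp del: upt_Suc)
        next
          case (Suc t)
          have t: "t < q - p" using j Suc by simp
          have "?c ! j = p + t" "?c ! Suc j = Suc (p + t)" "?u ! j = one" using Suc t pq
            by (simp_all add: nth_Cons' del: upt_Suc)
          thus ?thesis using E[of "p + t"] t pq by simp
        qed
      qed
      also have "\<dots> = F2 ?c ?u" using smap_lw[OF F2 c u] by simp
      finally show ?thesis .
    qed
    thus "F1 [p, q] [x] = F2 [p, q] [x]" using edge_det[OF F1 pq x] edge_det[OF F2 pq x] by simp
  qed
  show ?thesis
  proof (intro ext)
    fix a w
    show "F1 a w = F2 a w"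
    proof (cases "prod_valid G n a w")
      case False thus ?thesis using smap_undef[OF F1] smap_undef[OF F2] by simp
    next
      case True
      then obtain k where a: "a \<in> dsimp n k" and w: "w \<in> Dk G k" unfolding prod_valid_def by blast
      have la: "length a = Suc k" and lw: "length w = k" using dsimp_len[OF a] w by (auto simp: Dk_def)
      have "F1 a w = map (\<lambda>j. hd (F1 [a ! j, a ! Suc j] [w ! j])) [0..<k]" using smap_lw[OF F1 a w] .
      also have "\<dots> = map (\<lambda>j. hd (F2 [a ! j, a ! Suc j] [w ! j])) [0..<k]"
      proof (rule map_cong[OF refl])
        fix j assume "j \<in> set [0..<k]" hence j: "j < k" by simp
        have "a ! j \<le> a ! Suc j" using sorted_nth[OF dsimp_sorted[OF a], of j "Suc j"] la j by simp
        moreover have "a ! Suc j \<le> n" using dsimp_le[OF a] la j by simp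
        moreover have "w ! j \<in> M" using w in_D_M lw j by (auto simp: Dk_def)
        ultimately show "hd (F1 [a ! j, a ! Suc j] [w ! j]) = hd (F2 [a ! j, a ! Suc j] [w ! j])" using PQ by simp
      qed
      also have "\<dots> = F2 a w" using smap_lw[OF F2 a w] by simp
      finally show ?thesis .
    qed
  qed
qed

lemma g_inj: assumes F1: "aut_elem G n F1" and F2: "aut_elem G n F2" and eq: "gmap n F1 = gmap n F2"
  shows "F1 = F2"
proof -
  have S1: "prod_smap G n F1" and S2: "prod_smap G n F2" using aut_smap F1 F2 by auto
  have vv: "\<And>r. r \<le> n \<Longrightarrow> vert F1 r = vert F2 r"
  proof -
    fix r assume r: "r \<le> n"
    have "fst (gmap n F1) = fst (gmap n F2)" using eq by simp
    hence m: "map (vert F1) [0..<Suc n] = map (vert F2) [0..<Suc n]" by (simp only: gmap_def fst_conv)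
    have "map (vert F1) [0..<Suc n] ! r = map (vert F2) [0..<Suc n] ! r" using m by (rule arg_cong)
    thus "vert F1 r = vert F2 r" using r by (simp add: nth_map_upt del: upt_Suc)
  qed
  have ee: "\<And>r. r < n \<Longrightarrow> hd (F1 [r, Suc r] [one]) = hd (F2 [r, Suc r] [one])"
  proof -
    fix r assume r: "r < n"
    have "snd (gmap n F1) = snd (gmap n F2)" using eq by simp
    hence m: "map (\<lambda>i. hd (F1 [i, Suc i] [one])) [0..<n] = map (\<lambda>i. hd (F2 [i, Suc i] [one])) [0..<n]" by (simp only: gmap_def snd_conv)
    have "map (\<lambda>i. hd (F1 [i, Suc i] [one])) [0..<n] ! r = map (\<lambda>i. hd (F2 [i, Suc i] [one])) [0..<n] ! r"
      using m by (rule arg_cong)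
    thus "hd (F1 [r, Suc r] [one]) = hd (F2 [r, Suc r] [one])" using r by simp
  qed
  show ?thesis
  proof (rule UNIQ[OF S1 S2])
    fix r x assume r: "r \<le> n" and x: "x \<in> M"
    have "vert F1 r [x] = vert F2 r [x]" using vv[OF r] by simp
    moreover have "\<And>F. vert F r [x] = F [r, r] [x]" unfolding vert_def using sing_D[OF x] by (simp add: numeral_2_eq_2)
    ultimately show "F1 [r, r] [x] = F2 [r, r] [x]" by simp
  next
    fix r assume r: "r < n"
    show "F1 [r, Suc r] [one] = F2 [r, Suc r] [one]" using edge_sing[OF S1 r] edge_sing[OF S2 r] ee[OF r] by metis
  qed
qed

lemma g_surj: assumes X: "X \<in> sg_car (nerve_Aut G) n" shows "\<exists>F. aut_elem G n F \<and> gmap n F = X"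
proof -
  obtain Ps es where X': "X = (Ps, es)" by (cases X)
  interpret N: nerve_el G n Ps es using X X' pgrp_axioms unfolding nerve_el_def nerve_el_axioms_def by simp
  have v: "map (vert N.Fn) [0..<Suc n] = Ps"
  proof (rule nth_equalityI)
    show "length (map (vert N.Fn) [0..<Suc n]) = length Ps" using N.lenPs by simp
  next
    fix j assume "j < length (map (vert N.Fn) [0..<Suc n])" hence j: "j \<le> n" by simp
    have "vert N.Fn j = Ps ! j"
    proof
      fix w show "vert N.Fn j w = (Ps ! j) w"
        using N.Fn_vert[OF j] AutSet_undef[OF N.PsA[OF j]] unfolding vert_def by auto
    qed
    thus "map (vert N.Fn) [0..<Suc n] ! j = Ps ! j" using j by (simp del: upt_Suc)
  qed
  have e: "map (\<lambda>i. hd (N.Fn [i, Suc i] [one])) [0..<n] = es"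
    by (rule nth_equalityI) (simp_all add: N.lenes N.Fn_edge)
  show ?thesis using N.Fn_aut v e X' unfolding gmap_def by blast
qed

end


lemma mono_coface: "mono (coface i)" unfolding coface_def by (rule monoI) auto
lemma mono_codeg: "mono (codeg i)" unfolding codeg_def by (rule monoI) auto

context pgrp begin

definition reidx :: "nat \<Rightarrow> (nat \<Rightarrow> nat) \<Rightarrow> (nat list \<Rightarrow> 'a list \<Rightarrow> 'a list) \<Rightarrow> nat list \<Rightarrow> 'a list \<Rightarrow> 'a list" where
  "reidx n f F = (\<lambda>a w. if prod_valid G n a w then F (map f a) w else undefined)"

lemma dsimp_map: assumes a: "a \<in> dsimp n k" and f: "mono f" and fm: "\<forall>x\<le>n. f x \<le> m"
  shows "map f a \<in> dsimp m k"
proof -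
  have "sorted (map f a)" using a f by (intro sorted_map_mono) (auto simp: dsimp_def mono_on_def mono_def)
  thus ?thesis using a fm unfolding dsimp_def by auto
qed

lemma reidx_aut: assumes F: "aut_elem G m F" and f: "mono f" and fm: "\<forall>x\<le>n. f x \<le> m"
  shows "aut_elem G n (reidx n f F)"
  unfolding aut_elem_def prod_smap_def
proof (intro conjI allI impI)
  have Fs: "prod_smap G m F" using aut_smap[OF F] .
  have v: "\<And>a w k. a \<in> dsimp n k \<Longrightarrow> w \<in> Dk G k \<Longrightarrow> prod_valid G n a w" unfolding prod_valid_def by blast
  {
  fix k a w assume h: "a \<in> dsimp n k \<and> w \<in> Dk G k"
  have "prod_valid G n a w" using v h by blast
  thus "reidx n f F a w \<in> Dk G k" unfolding reidx_def using smap_Dk[OF Fs dsimp_map[OF _ f fm]] h by simp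
  }
  {
  fix a w assume "\<not> prod_valid G n a w" thus "reidx n f F a w = undefined" unfolding reidx_def by simp
  }
  {
  fix k a w i assume h: "a \<in> dsimp n (Suc k) \<and> w \<in> Dk G (Suc k) \<and> i \<le> Suc k"
  have v1: "prod_valid G n (ldel i a) (wface G (Suc k) i w)" using v dsimp_ldel wface_D h by blast
  have v2: "prod_valid G n a w" using v h by blast
  show "reidx n f F (ldel i a) (wface G (Suc k) i w) = wface G (Suc k) i (reidx n f F a w)"
    unfolding reidx_def using v1 v2 smap_face[OF Fs dsimp_map[OF _ f fm], of a k w i] h by (simp add: ldel_map)
  }
  {
  fix k a w i assume h: "a \<in> dsimp n k \<and> w \<in> Dk G k \<and> i \<le> k"
  have v1: "prod_valid G n (ldup i a) (wdeg G i w)" using v dsimp_ldup wdeg_D h by blast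
  have v2: "prod_valid G n a w" using v h by blast
  show "reidx n f F (ldup i a) (wdeg G i w) = wdeg G i (reidx n f F a w)"
    unfolding reidx_def using v1 v2 smap_deg[OF Fs dsimp_map[OF _ f fm], of a k w i] h by (simp add: ldup_map)
  }
  {
  fix k a assume a: "a \<in> dsimp n k"
  have "bij_betw (F (map f a)) (Dk G k) (Dk G k)" using aut_bij[OF F dsimp_map[OF a f fm]] .
  moreover have "\<And>w. w \<in> Dk G k \<Longrightarrow> F (map f a) w = reidx n f F a w" unfolding reidx_def using v[OF a] by simp
  ultimately show "bij_betw (reidx n f F a) (Dk G k) (Dk G k)" by (rule bij_betw_cong[THEN iffD1, rotated])
  }
qed

lemma aut_face_eq: "sg_face (aut_sg G) (Suc n) i F = reidx n (coface i) F"
  unfolding aut_sg_def reidx_def by simp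
lemma aut_deg_eq: "sg_deg (aut_sg G) n i F = reidx (Suc n) (codeg i) F"
  unfolding aut_sg_def reidx_def by simp

lemma aut_face_in: "aut_elem G (Suc n) F \<Longrightarrow> i \<le> Suc n \<Longrightarrow> aut_elem G n (sg_face (aut_sg G) (Suc n) i F)"
  unfolding aut_face_eq by (rule reidx_aut) (auto simp: mono_coface coface_def)
lemma aut_deg_in: "aut_elem G n F \<Longrightarrow> i \<le> n \<Longrightarrow> aut_elem G (Suc n) (sg_deg (aut_sg G) n i F)"
  unfolding aut_deg_eq by (rule reidx_aut) (auto simp: mono_codeg codeg_def)

definition amul :: "nat \<Rightarrow> (nat list \<Rightarrow> 'a list \<Rightarrow> 'a list) \<Rightarrow> (nat list \<Rightarrow> 'a list \<Rightarrow> 'a list) \<Rightarrow> nat list \<Rightarrow> 'a list \<Rightarrow> 'a list" where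
  "amul n S T = (\<lambda>a w. if prod_valid G n a w then T a (S a w) else undefined)"

lemma aut_mult_eq: "sg_mult (aut_sg G) n S T = amul n S T" unfolding aut_sg_def amul_def by simp

lemma amul_aut: assumes S: "aut_elem G n S" and T: "aut_elem G n T" shows "aut_elem G n (amul n S T)"
  unfolding aut_elem_def prod_smap_def
proof (intro conjI allI impI)
  have Ss: "prod_smap G n S" and Ts: "prod_smap G n T" using aut_smap S T by auto
  have v: "\<And>a w k. a \<in> dsimp n k \<Longrightarrow> w \<in> Dk G k \<Longrightarrow> prod_valid G n a w" unfolding prod_valid_def by blast
  {
  fix k a w assume h: "a \<in> dsimp n k \<and> w \<in> Dk G k"
  have "prod_valid G n a w" using v h by blast
  thus "amul n S T a w \<in> Dk G k" unfolding amul_def using smap_Dk[OF Ts] smap_Dk[OF Ss] h by simp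
  }
  {
  fix a w assume "\<not> prod_valid G n a w" thus "amul n S T a w = undefined" unfolding amul_def by simp
  }
  {
  fix k a w i assume h: "a \<in> dsimp n (Suc k) \<and> w \<in> Dk G (Suc k) \<and> i \<le> Suc k"
  have v1: "prod_valid G n (ldel i a) (wface G (Suc k) i w)" using v dsimp_ldel wface_D h by blast
  have v2: "prod_valid G n a w" using v h by blast
  have sw: "S a w \<in> Dk G (Suc k)" using smap_Dk[OF Ss] h by blast
  have "T (ldel i a) (S (ldel i a) (wface G (Suc k) i w)) = T (ldel i a) (wface G (Suc k) i (S a w))"
    using smap_face[OF Ss, of a k w i] h by simp
  also have "\<dots> = wface G (Suc k) i (T a (S a w))" using smap_face[OF Ts, of a k "S a w" i] h sw by simp
  finally show "amul n S T (ldel i a) (wface G (Suc k) i w) = wface G (Suc k) i (amul n S T a w)"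
    unfolding amul_def using v1 v2 by simp
  }
  {
  fix k a w i assume h: "a \<in> dsimp n k \<and> w \<in> Dk G k \<and> i \<le> k"
  have v1: "prod_valid G n (ldup i a) (wdeg G i w)" using v dsimp_ldup wdeg_D h by blast
  have v2: "prod_valid G n a w" using v h by blast
  have sw: "S a w \<in> Dk G k" using smap_Dk[OF Ss] h by blast
  have "T (ldup i a) (S (ldup i a) (wdeg G i w)) = T (ldup i a) (wdeg G i (S a w))"
    using smap_deg[OF Ss, of a k w i] h by simp
  also have "\<dots> = wdeg G i (T a (S a w))" using smap_deg[OF Ts, of a k "S a w" i] h sw by simp
  finally show "amul n S T (ldup i a) (wdeg G i w) = wdeg G i (amul n S T a w)"
    unfolding amul_def using v1 v2 by simp
  }
  {
  fix k a assume a: "a \<in> dsimp n k"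
  have "bij_betw (T a \<circ> S a) (Dk G k) (Dk G k)" using aut_bij[OF S a] aut_bij[OF T a] by (rule bij_betw_trans)
  moreover have "\<And>w. w \<in> Dk G k \<Longrightarrow> (T a \<circ> S a) w = amul n S T a w" unfolding amul_def using v[OF a] by simp
  ultimately show "bij_betw (amul n S T a) (Dk G k) (Dk G k)" by (rule bij_betw_cong[THEN iffD1, rotated])
  }
qed


lemma wface_nth: assumes lw: "length w = Suc k" and i: "0 < i" "i < Suc k" and l: "l < k"
  shows "wface G (Suc k) i w ! l = (if l < i - 1 then w ! l else if l = i - 1 then Pi [w ! (i - 1), w ! i] else w ! Suc l)"
  unfolding wface_inner[OF i] using lw i l by (auto simp: nth_append min_def)

lemma wface_len: "length w = Suc k \<Longrightarrow> i \<le> Suc k \<Longrightarrow> length (wface G (Suc k) i w) = k"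
  unfolding wface_def by auto

lemma edge2: assumes F: "prod_smap G m F" and r: "Suc (Suc r) \<le> m"
  shows "hd (F [r, Suc (Suc r)] [one]) = Pi [hd (F [r, Suc r] [one]), hd (F [Suc r, Suc (Suc r)] [one])]"
proof -
  let ?c = "[r, Suc r, Suc (Suc r)]" and ?u = "[one, one]"
  have c: "?c \<in> dsimp m (Suc (Suc 0))" using r unfolding dsimp_def by simp
  have u: "?u \<in> Dk G (Suc (Suc 0))" using one_one_D by (simp add: Dk_def)
  have "F ?c ?u = map (\<lambda>j. hd (F [?c ! j, ?c ! Suc j] [?u ! j])) [0..<Suc (Suc 0)]" using smap_lw[OF F c u] .
  hence e: "F ?c ?u = [hd (F [r, Suc r] [one]), hd (F [Suc r, Suc (Suc r)] [one])]" by simp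
  have "[Pi (F ?c ?u)] = F [hd ?c, last ?c] [Pi ?u]" using smap_long[OF F c u] .
  hence "F [r, Suc (Suc r)] [one] = [Pi (F ?c ?u)]" using Pi_one_one by simp
  thus ?thesis using e by simp
qed

lemma vert_reidx: assumes j: "j \<le> n" shows "vert (reidx n f F) j = vert F (f j)"
proof
  fix w show "vert (reidx n f F) j w = vert F (f j) w"
  proof (cases "w \<in> D")
    case True
    have "prod_valid G n (replicate (Suc (length w)) j) w" unfolding prod_valid_def
      using rep_dsimp'[OF j] True by (auto simp: Dk_def)
    thus ?thesis unfolding vert_def reidx_def using True by simp
  qed (simp add: vert_def)
qed

lemma edge_reidx: assumes l: "Suc l \<le> n" shows "reidx n f F [l, Suc l] [one] = F [f l, f (Suc l)] [one]"
proof -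
  have "prod_valid G n [l, Suc l] [one]" unfolding prod_valid_def using l sing_Dk1 by (auto simp: dsimp_def)
  thus ?thesis unfolding reidx_def by simp
qed

lemma nerve_face_eq: "sg_face (nerve_Aut G) n i (Ps, es) = (ldel i Ps, wface G n i es)"
  unfolding nerve_Aut_def by simp
lemma nerve_deg_eq: "sg_deg (nerve_Aut G) n i (Ps, es) = (ldup i Ps, wdeg G i es)"
  unfolding nerve_Aut_def by simp
lemma nerve_mult_eq: "sg_mult (nerve_Aut G) n (Ps, es) (Qs, fs) =
   (map2 (aut_comp G) Ps Qs, map (\<lambda>i. Pi ((Ps ! i) [fs ! i] @ [es ! i])) [0..<n])"
  unfolding nerve_Aut_def by simp

lemma g_face: assumes F: "aut_elem G (Suc n) F" and i: "i \<le> Suc n"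
  shows "gmap n (sg_face (aut_sg G) (Suc n) i F) = sg_face (nerve_Aut G) (Suc n) i (gmap (Suc n) F)"
proof -
  have Fs: "prod_smap G (Suc n) F" using aut_smap[OF F] .
  let ?E = "\<lambda>l. hd (F [l, Suc l] [one])"
  have p1: "map (vert (reidx n (coface i) F)) [0..<Suc n] = ldel i (map (vert F) [0..<Suc (Suc n)])"
  proof (rule nth_equalityI)
    show "length (map (vert (reidx n (coface i) F)) [0..<Suc n]) = length (ldel i (map (vert F) [0..<Suc (Suc n)]))"
      using i by (simp add: length_ldel del: upt_Suc)
  next
    fix j assume "j < length (map (vert (reidx n (coface i) F)) [0..<Suc n])"
    hence j: "j < Suc n" by simp
    have "ldel i (map (vert F) [0..<Suc (Suc n)]) ! j = map (vert F) [0..<Suc (Suc n)] ! coface i j"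
      using nth_ldel[of i "map (vert F) [0..<Suc (Suc n)]" j] i j by (simp del: upt_Suc)
    also have "\<dots> = vert F (coface i j)" using j by (simp add: coface_def nth_map_upt del: upt_Suc)
    finally show "map (vert (reidx n (coface i) F)) [0..<Suc n] ! j = ldel i (map (vert F) [0..<Suc (Suc n)]) ! j"
      using vert_reidx[of j n "coface i" F] j by (simp add: nth_map_upt del: upt_Suc)
  qed
  have p2: "map (\<lambda>l. hd (reidx n (coface i) F [l, Suc l] [one])) [0..<n] = wface G (Suc n) i (map ?E [0..<Suc n])"
  proof (rule nth_equalityI)
    show "length (map (\<lambda>l. hd (reidx n (coface i) F [l, Suc l] [one])) [0..<n]) = length (wface G (Suc n) i (map ?E [0..<Suc n]))"
      using wface_len[of "map ?E [0..<Suc n]" n i] i by (simp del: upt_Suc)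
  next
    fix l assume "l < length (map (\<lambda>l. hd (reidx n (coface i) F [l, Suc l] [one])) [0..<n])"
    hence l: "l < n" by simp
    have lhs: "map (\<lambda>l. hd (reidx n (coface i) F [l, Suc l] [one])) [0..<n] ! l = hd (F [coface i l, coface i (Suc l)] [one])"
      using l edge_reidx[of l n "coface i" F] by simp
    show "map (\<lambda>l. hd (reidx n (coface i) F [l, Suc l] [one])) [0..<n] ! l = wface G (Suc n) i (map ?E [0..<Suc n]) ! l"
    proof (cases "i = 0")
      case True
      thus ?thesis unfolding lhs using l by (simp add: wface_def nth_tl coface_def nth_map_upt del: upt_Suc)
    next
      case False note i0 = this
      show ?thesis
      proof (cases "i = Suc n")
        case True
        thus ?thesis unfolding lhs using l by (simp add: wface_def nth_butlast coface_def nth_map_upt del: upt_Suc)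
      next
        case False
        hence ii: "0 < i" "i < Suc n" using i i0 by auto
        have w: "wface G (Suc n) i (map ?E [0..<Suc n]) ! l = (if l < i - 1 then ?E l else if l = i - 1 then Pi [?E (i - 1), ?E i] else ?E (Suc l))"
          using wface_nth[of "map ?E [0..<Suc n]" n i l] ii l by (simp add: nth_map_upt del: upt_Suc)
        show ?thesis
        proof (cases "l < i - 1")
          case True
          hence "Suc l < i" by simp
          thus ?thesis unfolding lhs w using True by (simp add: coface_def)
        next
          case False note nl = this
          show ?thesis
          proof (cases "l = i - 1")
            case True
            have "hd (F [coface i l, coface i (Suc l)] [one]) = hd (F [i - 1, Suc (Suc (i - 1))] [one])"
              using True ii by (simp add: coface_def)
            also have "\<dots> = Pi [?E (i - 1), ?E (Suc (i - 1))]" using edge2[OF Fs, of "i - 1"] ii by simp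
            finally show ?thesis unfolding lhs w using True nl ii by simp
          next
            case False
            hence "i \<le> l" using nl ii by simp
            thus ?thesis unfolding lhs w using nl False by (simp add: coface_def)
          qed
        qed
      qed
    qed
  qed
  show ?thesis unfolding aut_face_eq gmap_def nerve_face_eq using p1 p2 by simp
qed

lemma g_deg: assumes F: "aut_elem G n F" and i: "i \<le> n"
  shows "gmap (Suc n) (sg_deg (aut_sg G) n i F) = sg_deg (nerve_Aut G) n i (gmap n F)"
proof -
  have Fs: "prod_smap G n F" using aut_smap[OF F] .
  let ?E = "\<lambda>l. hd (F [l, Suc l] [one])"
  have p1: "map (vert (reidx (Suc n) (codeg i) F)) [0..<Suc (Suc n)] = ldup i (map (vert F) [0..<Suc n])"
  proof (rule nth_equalityI)
    show "length (map (vert (reidx (Suc n) (codeg i) F)) [0..<Suc (Suc n)]) = length (ldup i (map (vert F) [0..<Suc n]))"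
      using i by (simp add: length_ldup del: upt_Suc)
  next
    fix j assume "j < length (map (vert (reidx (Suc n) (codeg i) F)) [0..<Suc (Suc n)])"
    hence j: "j < Suc (Suc n)" by simp
    have "ldup i (map (vert F) [0..<Suc n]) ! j = map (vert F) [0..<Suc n] ! codeg i j"
      using nth_ldup[of i "map (vert F) [0..<Suc n]" j] i j by (simp del: upt_Suc)
    also have "\<dots> = vert F (codeg i j)" using j i by (simp add: codeg_def nth_map_upt del: upt_Suc)
    finally show "map (vert (reidx (Suc n) (codeg i) F)) [0..<Suc (Suc n)] ! j = ldup i (map (vert F) [0..<Suc n]) ! j"
      using vert_reidx[of j "Suc n" "codeg i" F] j by (simp add: nth_map_upt del: upt_Suc)
  qed
  have vi: "F [i, i] [one] = [one]"
  proof -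
    have "vert F i [one] = [one]" using aut_one[OF vert_Aut[OF F i]] .
    thus ?thesis unfolding vert_def using sing_D[OF one_M] by (simp add: numeral_2_eq_2)
  qed
  have p2: "map (\<lambda>l. hd (reidx (Suc n) (codeg i) F [l, Suc l] [one])) [0..<Suc n] = wdeg G i (map ?E [0..<n])"
  proof (rule nth_equalityI)
    show "length (map (\<lambda>l. hd (reidx (Suc n) (codeg i) F [l, Suc l] [one])) [0..<Suc n]) = length (wdeg G i (map ?E [0..<n]))"
      using i by (simp add: wdeg_def del: upt_Suc)
  next
    fix l assume "l < length (map (\<lambda>l. hd (reidx (Suc n) (codeg i) F [l, Suc l] [one])) [0..<Suc n])"
    hence l: "l < Suc n" by simp
    have lhs: "map (\<lambda>l. hd (reidx (Suc n) (codeg i) F [l, Suc l] [one])) [0..<Suc n] ! l = hd (F [codeg i l, codeg i (Suc l)] [one])"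
      using l edge_reidx[of l "Suc n" "codeg i" F] by (simp del: upt_Suc)
    have w: "wdeg G i (map ?E [0..<n]) ! l = (if l < i then ?E l else if l = i then one else ?E (l - 1))"
      unfolding wdeg_def using i l by (auto simp: nth_append min_def nth_map_upt)
    show "map (\<lambda>l. hd (reidx (Suc n) (codeg i) F [l, Suc l] [one])) [0..<Suc n] ! l = wdeg G i (map ?E [0..<n]) ! l"
      unfolding lhs w using vi by (auto simp: codeg_def)
  qed
  show ?thesis unfolding aut_deg_eq gmap_def nerve_deg_eq using p1 p2 by simp
qed

lemma g_mult: assumes S: "aut_elem G n S" and T: "aut_elem G n T"
  shows "gmap n (sg_mult (aut_sg G) n S T) = sg_mult (nerve_Aut G) n (gmap n T) (gmap n S)"
proof -
  have Ss: "prod_smap G n S" and Ts: "prod_smap G n T" using aut_smap S T by auto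
  have p1: "map (vert (amul n S T)) [0..<Suc n] = map2 (aut_comp G) (map (vert T) [0..<Suc n]) (map (vert S) [0..<Suc n])"
  proof (rule nth_equalityI)
    fix j assume "j < length (map (vert (amul n S T)) [0..<Suc n])"
    hence j: "j \<le> n" by simp
    have "vert (amul n S T) j = aut_comp G (vert T j) (vert S j)"
    proof
      fix w show "vert (amul n S T) j w = aut_comp G (vert T j) (vert S j) w"
      proof (cases "w \<in> D")
        case True
        let ?r = "replicate (Suc (length w)) j"
        have wk: "w \<in> Dk G (length w)" using True by (simp add: Dk_def)
        have v: "prod_valid G n ?r w" unfolding prod_valid_def using rep_dsimp'[OF j] wk by blast
        have sw: "S ?r w \<in> Dk G (length w)" using smap_Dk[OF Ss rep_dsimp'[OF j] wk] .
        have sD: "S ?r w \<in> D" "length (S ?r w) = length w" using sw by (auto simp: Dk_def)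
        thus ?thesis unfolding vert_def amul_def aut_comp_def using True v by (simp del: replicate_Suc)
      qed (simp add: vert_def aut_comp_def)
    qed
    thus "map (vert (amul n S T)) [0..<Suc n] ! j = map2 (aut_comp G) (map (vert T) [0..<Suc n]) (map (vert S) [0..<Suc n]) ! j"
      using j by (simp add: nth_map_upt del: upt_Suc)
  qed simp
  have p2: "map (\<lambda>i. hd (amul n S T [i, Suc i] [one])) [0..<n] =
    map (\<lambda>i. Pi ((map (vert T) [0..<Suc n] ! i) [map (\<lambda>i. hd (S [i, Suc i] [one])) [0..<n] ! i] @ [map (\<lambda>i. hd (T [i, Suc i] [one])) [0..<n] ! i])) [0..<n]"
  proof (rule map_cong[OF refl])
    fix i assume "i \<in> set [0..<n]" hence i: "i < n" by simp
    interpret H: hom G "vert T i" "vert T (Suc i)" "hd (T [i, Suc i] [one])" "restr T i" using restr_hom[OF T i] .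
    let ?s = "hd (S [i, Suc i] [one])"
    have se: "S [i, Suc i] [one] = [?s]" using edge_sing[OF Ss i] .
    have d: "[i, Suc i] \<in> dsimp n (Suc 0)" using i unfolding dsimp_def by simp
    have sM: "?s \<in> M" using smap_Dk[OF Ss d sing_Dk1] se Dk1 by (metis list.inject)
    have v: "prod_valid G n [i, Suc i] [one]" unfolding prod_valid_def using d sing_Dk1 by blast
    have v1: "prod_valid G 1 [0, 1] [?s]" unfolding prod_valid_def using d01' sing_D[OF sM] by (auto simp: Dk_def)
    have "amul n S T [i, Suc i] [one] = T [i, Suc i] [?s]" unfolding amul_def using v se by simp
    also have "\<dots> = restr T i [0, 1] [?s]" unfolding restr_def using v1 by simp
    also have "\<dots> = [Pi [pl (vert T i) ?s, hd (T [i, Suc i] [one])]]" using H.F01a[OF sM] by simp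
    finally have "hd (amul n S T [i, Suc i] [one]) = Pi [pl (vert T i) ?s, hd (T [i, Suc i] [one])]" by simp
    moreover have "vert T i [?s] = [pl (vert T i) ?s]" using aut_pl[OF vert_Aut[OF T] sM] i by simp
    ultimately show "hd (amul n S T [i, Suc i] [one]) = Pi ((map (vert T) [0..<Suc n] ! i) [map (\<lambda>i. hd (S [i, Suc i] [one])) [0..<n] ! i] @ [map (\<lambda>i. hd (T [i, Suc i] [one])) [0..<n] ! i])"
      using i by (simp add: nth_map_upt del: upt_Suc)
  qed
  show ?thesis unfolding aut_mult_eq gmap_def nerve_mult_eq using p1 p2 by simp
qed

end


lemma inv_cong: "bij_betw g A A \<Longrightarrow> x \<in> A \<Longrightarrow> g x = y \<Longrightarrow> inv_into A g y = x"
  by (metis bij_betw_def inv_into_f_f)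

context pgrp begin

definition finv :: "nat \<Rightarrow> (nat list \<Rightarrow> 'a list \<Rightarrow> 'a list) \<Rightarrow> nat list \<Rightarrow> 'a list \<Rightarrow> 'a list" where
  "finv n F = (\<lambda>a w. if prod_valid G n a w then inv_into (Dk G (length w)) (F a) w else undefined)"

lemma valid_k: "prod_valid G n a w \<Longrightarrow> a \<in> dsimp n (length w) \<and> w \<in> Dk G (length w)"
  unfolding prod_valid_def Dk_def by auto

lemma finv_val: assumes F: "aut_elem G n F" and a: "a \<in> dsimp n k" and w: "w \<in> Dk G k"
  shows "finv n F a w \<in> Dk G k \<and> F a (finv n F a w) = w"
proof -
  have lw: "length w = k" using w by (simp add: Dk_def)
  have v: "prod_valid G n a w" unfolding prod_valid_def using a w by blast
  have b: "bij_betw (F a) (Dk G k) (Dk G k)" using aut_bij[OF F a] .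
  have "inv_into (Dk G k) (F a) w \<in> Dk G k" using b w by (metis bij_betw_def inv_into_into)
  moreover have "F a (inv_into (Dk G k) (F a) w) = w" using b w by (meson bij_betw_inv_into_right)
  ultimately show ?thesis unfolding finv_def using v lw by simp
qed

lemma finv_unique: assumes F: "aut_elem G n F" and a: "a \<in> dsimp n k" and x: "x \<in> Dk G k" and e: "F a x = w"
  shows "finv n F a w = x"
proof -
  have w: "w \<in> Dk G k" using smap_Dk[OF aut_smap[OF F] a x] e by simp
  have b: "bij_betw (F a) (Dk G k) (Dk G k)" using aut_bij[OF F a] .
  have v: "prod_valid G n a w" unfolding prod_valid_def using a w by blast
  show ?thesis unfolding finv_def using v inv_cong[OF b x e] w by (simp add: Dk_def)
qed

lemma finv_aut: assumes F: "aut_elem G n F" shows "aut_elem G n (finv n F)"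
  unfolding aut_elem_def prod_smap_def
proof (intro conjI allI impI)
  have Fs: "prod_smap G n F" using aut_smap[OF F] .
  {
  fix k a w assume h: "a \<in> dsimp n k \<and> w \<in> Dk G k"
  thus "finv n F a w \<in> Dk G k" using finv_val[OF F] by blast
  }
  {
  fix a w assume "\<not> prod_valid G n a w" thus "finv n F a w = undefined" unfolding finv_def by simp
  }
  {
  fix k a w i assume h: "a \<in> dsimp n (Suc k) \<and> w \<in> Dk G (Suc k) \<and> i \<le> Suc k"
  let ?v = "finv n F a w"
  have v: "?v \<in> Dk G (Suc k)" "F a ?v = w" using finv_val[OF F] h by auto
  have "F (ldel i a) (wface G (Suc k) i ?v) = wface G (Suc k) i w" using smap_face[OF Fs, of a k ?v i] h v by simp
  thus "finv n F (ldel i a) (wface G (Suc k) i w) = wface G (Suc k) i (finv n F a w)"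
    using finv_unique[OF F dsimp_ldel[of a n k i]] wface_D[OF v(1), of i] h by blast
  }
  {
  fix k a w i assume h: "a \<in> dsimp n k \<and> w \<in> Dk G k \<and> i \<le> k"
  let ?v = "finv n F a w"
  have v: "?v \<in> Dk G k" "F a ?v = w" using finv_val[OF F] h by auto
  have "F (ldup i a) (wdeg G i ?v) = wdeg G i w" using smap_deg[OF Fs, of a k ?v i] h v by simp
  thus "finv n F (ldup i a) (wdeg G i w) = wdeg G i (finv n F a w)"
    using finv_unique[OF F dsimp_ldup[of a n k i]] wdeg_D[OF v(1), of i] h by blast
  }
  {
  fix k a assume a: "a \<in> dsimp n k"
  have b: "bij_betw (F a) (Dk G k) (Dk G k)" using aut_bij[OF F a] .
  have "bij_betw (inv_into (Dk G k) (F a)) (Dk G k) (Dk G k)" using bij_betw_inv_into[OF b] .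
  moreover have "\<And>w. w \<in> Dk G k \<Longrightarrow> inv_into (Dk G k) (F a) w = finv n F a w"
    unfolding finv_def prod_valid_def using a by (auto simp: Dk_def)
  ultimately show "bij_betw (finv n F a) (Dk G k) (Dk G k)" by (rule bij_betw_cong[THEN iffD1, rotated])
  }
qed

lemma finv_finv: assumes F: "aut_elem G n F" shows "finv n (finv n F) = F"
proof (intro ext)
  fix a w
  show "finv n (finv n F) a w = F a w"
  proof (cases "prod_valid G n a w")
    case False thus ?thesis unfolding finv_def using smap_undef[OF aut_smap[OF F] False] by simp
  next
    case True
    hence a: "a \<in> dsimp n (length w)" and w: "w \<in> Dk G (length w)" using valid_k by auto
    have y: "F a w \<in> Dk G (length w)" using smap_Dk[OF aut_smap[OF F] a w] .
    have "finv n F a (F a w) = w" using finv_unique[OF F a w] by simp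
    thus ?thesis using finv_unique[OF finv_aut[OF F] a y] by simp
  qed
qed

lemma finv_reidx: assumes F: "aut_elem G m F" and f: "mono f" and fm: "\<forall>x\<le>n. f x \<le> m"
  shows "finv n (reidx n f F) = reidx n f (finv m F)"
proof (intro ext)
  fix a w
  show "finv n (reidx n f F) a w = reidx n f (finv m F) a w"
  proof (cases "prod_valid G n a w")
    case False thus ?thesis unfolding finv_def reidx_def by simp
  next
    case True
    hence a: "a \<in> dsimp n (length w)" and w: "w \<in> Dk G (length w)" using valid_k by auto
    have b: "map f a \<in> dsimp m (length w)" using dsimp_map[OF a f fm] .
    have x: "finv m F (map f a) w \<in> Dk G (length w)" "F (map f a) (finv m F (map f a) w) = w" using finv_val[OF F b w] by auto
    have "reidx n f F a (finv m F (map f a) w) = w" unfolding reidx_def using x a unfolding prod_valid_def by auto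
    hence "finv n (reidx n f F) a w = finv m F (map f a) w" using finv_unique[OF reidx_aut[OF F f fm] a x(1)] by simp
    thus ?thesis unfolding reidx_def using True by simp
  qed
qed

lemma finv_amul: assumes S: "aut_elem G n S" and T: "aut_elem G n T"
  shows "finv n (amul n S T) = amul n (finv n T) (finv n S)"
proof (intro ext)
  fix a w
  show "finv n (amul n S T) a w = amul n (finv n T) (finv n S) a w"
  proof (cases "prod_valid G n a w")
    case False thus ?thesis unfolding finv_def amul_def by simp
  next
    case True
    hence a: "a \<in> dsimp n (length w)" and w: "w \<in> Dk G (length w)" using valid_k by auto
    let ?y = "finv n T a w"
    have y: "?y \<in> Dk G (length w)" "T a ?y = w" using finv_val[OF T a w] by auto
    let ?x = "finv n S a ?y"
    have x: "?x \<in> Dk G (length w)" "S a ?x = ?y" using finv_val[OF S a y(1)] by auto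
    have va: "prod_valid G n a ?x" unfolding prod_valid_def using a x by blast
    have "amul n S T a ?x = w" unfolding amul_def using va x y by simp
    hence "finv n (amul n S T) a w = ?x" using finv_unique[OF amul_aut[OF S T] a x(1)] by simp
    thus ?thesis unfolding amul_def using True by simp
  qed
qed

definition hh :: "nat \<Rightarrow> (nat list \<Rightarrow> 'a list \<Rightarrow> 'a list) \<Rightarrow> ('a list \<Rightarrow> 'a list) list \<times> 'a list" where
  "hh n F = gmap n (finv n F)"

lemma aut_car: "sg_car (aut_sg G) n = {F. aut_elem G n F}" unfolding aut_sg_def by simp

lemma hh_bij: "bij_betw (hh n) {F. aut_elem G n F} (sg_car (nerve_Aut G) n)"
  unfolding bij_betw_def
proof
  show "inj_on (hh n) {F. aut_elem G n F}"
  proof (rule inj_onI)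
    fix F1 F2 assume F1: "F1 \<in> {F. aut_elem G n F}" and F2: "F2 \<in> {F. aut_elem G n F}" and e: "hh n F1 = hh n F2"
    have "finv n F1 = finv n F2" using g_inj[OF finv_aut finv_aut] F1 F2 e unfolding hh_def by simp
    thus "F1 = F2" using finv_finv F1 F2 by (metis mem_Collect_eq)
  qed
next
  show "hh n ` {F. aut_elem G n F} = sg_car (nerve_Aut G) n"
  proof
    show "hh n ` {F. aut_elem G n F} \<subseteq> sg_car (nerve_Aut G) n" unfolding hh_def using g_in finv_aut by blast
  next
    show "sg_car (nerve_Aut G) n \<subseteq> hh n ` {F. aut_elem G n F}"
    proof
      fix X assume "X \<in> sg_car (nerve_Aut G) n"
      then obtain F where F: "aut_elem G n F" "gmap n F = X" using g_surj by blast
      have "hh n (finv n F) = X" unfolding hh_def using finv_finv[OF F(1)] F(2) by simp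
      thus "X \<in> hh n ` {F. aut_elem G n F}" using finv_aut[OF F(1)] by blast
    qed
  qed
qed

lemma main: "\<exists>f. ssg_iso (nerve_Aut G) (aut_sg G) f"
proof -
  define f where "f = (\<lambda>n. inv_into {F. aut_elem G n F} (hh n))"
  have B: "\<And>n. bij_betw (f n) (sg_car (nerve_Aut G) n) {F. aut_elem G n F}"
    unfolding f_def by (rule bij_betw_inv_into[OF hh_bij])
  have fin: "\<And>n x. x \<in> sg_car (nerve_Aut G) n \<Longrightarrow> aut_elem G n (f n x) \<and> hh n (f n x) = x"
  proof -
    fix n x assume x: "x \<in> sg_car (nerve_Aut G) n"
    have "f n x \<in> {F. aut_elem G n F}" using B x by (meson bij_betwE)
    moreover have "hh n (f n x) = x"
    proof -
      have "x \<in> hh n ` {F. aut_elem G n F}" using hh_bij[of n] x unfolding bij_betw_def by simp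
      thus ?thesis unfolding f_def by (rule f_inv_into_f)
    qed
    ultimately show "aut_elem G n (f n x) \<and> hh n (f n x) = x" by simp
  qed
  have fhh: "\<And>n F. aut_elem G n F \<Longrightarrow> f n (hh n F) = F"
    unfolding f_def using hh_bij by (metis bij_betw_inv_into_left mem_Collect_eq)
  have "ssg_iso (nerve_Aut G) (aut_sg G) f"
    unfolding ssg_iso_def aut_car
  proof (intro conjI allI impI)
    fix n show "bij_betw (f n) (sg_car (nerve_Aut G) n) {F. aut_elem G n F}" using B .
  next
    fix n i x assume h: "x \<in> sg_car (nerve_Aut G) (Suc n) \<and> i \<le> Suc n"
    let ?F = "f (Suc n) x"
    have F: "aut_elem G (Suc n) ?F" "hh (Suc n) ?F = x" using fin h by auto
    have fa: "aut_elem G n (sg_face (aut_sg G) (Suc n) i ?F)" using aut_face_in[OF F(1)] h by simp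
    have "hh n (sg_face (aut_sg G) (Suc n) i ?F) = gmap n (finv n (reidx n (coface i) ?F))"
      unfolding hh_def aut_face_eq ..
    also have "\<dots> = gmap n (reidx n (coface i) (finv (Suc n) ?F))"
    proof -
      have "\<forall>x\<le>n. coface i x \<le> Suc n" by (auto simp: coface_def)
      thus ?thesis using finv_reidx[OF F(1) mono_coface] by simp
    qed
    also have "\<dots> = sg_face (nerve_Aut G) (Suc n) i (gmap (Suc n) (finv (Suc n) ?F))"
      using g_face[OF finv_aut[OF F(1)]] h unfolding aut_face_eq by simp
    also have "\<dots> = sg_face (nerve_Aut G) (Suc n) i x" using F(2) unfolding hh_def by simp
    finally have "f n (sg_face (nerve_Aut G) (Suc n) i x) = f n (hh n (sg_face (aut_sg G) (Suc n) i ?F))" by simp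
    also have "\<dots> = sg_face (aut_sg G) (Suc n) i ?F" using fhh[OF fa] .
    finally show "f n (sg_face (nerve_Aut G) (Suc n) i x) = sg_face (aut_sg G) (Suc n) i (f (Suc n) x)" .
  next
    fix n i x assume h: "x \<in> sg_car (nerve_Aut G) n \<and> i \<le> n"
    let ?F = "f n x"
    have F: "aut_elem G n ?F" "hh n ?F = x" using fin h by auto
    have fa: "aut_elem G (Suc n) (sg_deg (aut_sg G) n i ?F)" using aut_deg_in[OF F(1)] h by simp
    have "hh (Suc n) (sg_deg (aut_sg G) n i ?F) = gmap (Suc n) (finv (Suc n) (reidx (Suc n) (codeg i) ?F))"
      unfolding hh_def aut_deg_eq ..
    also have "\<dots> = gmap (Suc n) (reidx (Suc n) (codeg i) (finv n ?F))"
    proof -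
      have "\<forall>x\<le>Suc n. codeg i x \<le> n" using h by (auto simp: codeg_def)
      thus ?thesis using finv_reidx[OF F(1) mono_codeg] by simp
    qed
    also have "\<dots> = sg_deg (nerve_Aut G) n i (gmap n (finv n ?F))"
      using g_deg[OF finv_aut[OF F(1)]] h unfolding aut_deg_eq by simp
    also have "\<dots> = sg_deg (nerve_Aut G) n i x" using F(2) unfolding hh_def by simp
    finally have "f (Suc n) (sg_deg (nerve_Aut G) n i x) = f (Suc n) (hh (Suc n) (sg_deg (aut_sg G) n i ?F))" by simp
    also have "\<dots> = sg_deg (aut_sg G) n i ?F" using fhh[OF fa] .
    finally show "f (Suc n) (sg_deg (nerve_Aut G) n i x) = sg_deg (aut_sg G) n i (f n x)" .
  next
    fix n x y assume h: "x \<in> sg_car (nerve_Aut G) n \<and> y \<in> sg_car (nerve_Aut G) n"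
    let ?S = "f n x" and ?T = "f n y"
    have S: "aut_elem G n ?S" "hh n ?S = x" and T: "aut_elem G n ?T" "hh n ?T = y" using fin h by auto
    have fa: "aut_elem G n (sg_mult (aut_sg G) n ?S ?T)" using amul_aut[OF S(1) T(1)] unfolding aut_mult_eq .
    have "hh n (sg_mult (aut_sg G) n ?S ?T) = gmap n (finv n (amul n ?S ?T))"
      unfolding hh_def aut_mult_eq ..
    also have "\<dots> = gmap n (amul n (finv n ?T) (finv n ?S))" using finv_amul[OF S(1) T(1)] by simp
    also have "\<dots> = sg_mult (nerve_Aut G) n (gmap n (finv n ?S)) (gmap n (finv n ?T))"
      using g_mult[OF finv_aut[OF T(1)] finv_aut[OF S(1)]] unfolding aut_mult_eq .
    also have "\<dots> = sg_mult (nerve_Aut G) n x y" using S(2) T(2) unfolding hh_def by simp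
    finally have "f n (sg_mult (nerve_Aut G) n x y) = f n (hh n (sg_mult (aut_sg G) n ?S ?T))" by simp
    also have "\<dots> = sg_mult (aut_sg G) n ?S ?T" using fhh[OF fa] .
    finally show "f n (sg_mult (nerve_Aut G) n x y) = sg_mult (aut_sg G) n (f n x) (f n y)" .
  qed
  thus ?thesis by blast
qed

end

theorem theorem5p10:
  fixes G :: "'a pgroup"
  assumes "partial_group G"
  shows "\<exists>f. ssg_iso (nerve_Aut G) (aut_sg G) f"
proof -
  interpret pgrp G using assms by (unfold_locales)
  show ?thesis by (rule main)
qed



end
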